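(* Let $(M,g)$ be an $n$-dimensional Lorentzian spacetime with $n>4$, and let $\boldsymbol{\ell}$ be the tangent vector of a geodetic null congruence which is not a WAND (in particular, any geodetic null congruence in an algebraically general spacetime). If $\sigma_{ij}=0$ for all $i,j$, then $A_{ij}\neq 0$ for some $i,j$; i.e. a shearfree geodetic null congruence is necessarily twisting unless it is a WAND.
   Context: Complete $\boldsymbol{\ell}$ to a null frame $\{\boldsymbol{n},\boldsymbol{\ell},\boldsymbol{m}^{(2)},\dots,\boldsymbol{m}^{(n-1)}\}$ with $\ell^a\ell_a=n^an_a=\ell^a m^{(i)}_a=n^a m^{(i)}_a=0$, $\ell^a n_a=1$, $m^{(i)a}m^{(j)}_a=\delta_{ij}$; indices $i,j,k$ range over $2,\dots,n-1$. Set $L_{i0}=\ell_{a;b}m^{(i)a}\ell^b$, $L_{ij}=\ell_{a;b}m^{(i)a}m^{(j)b}$, and $C_{0i0j}=C_{abcd}\ell^a m^{(i)b}\ell^c m^{(j)d}$ for the Weyl tensor $C$. $\boldsymbol{\ell}$ is geodetic iff $L_{i0}=0$ for all $i$. Decompose $L_{ij}=\sigma_{ij}+\theta\delta_{ij}+A_{ij}$ with shear $\sigma_{ij}=L_{(ij)}-\frac{1}{n-2}L_{kk}\delta_{ij}$, expansion $\theta=\frac{1}{n-2}L_{kk}$, twist $A_{ij}=L_{[ij]}$. A null vector $\boldsymbol{\ell}$ is a WAND (Weyl aligned null direction) if $C_{0i0j}=0$ for all $i,j$; a spacetime is algebraically general (type G) if it admits no WAND. *)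

theory Defs
  imports "HOL-Analysis.Analysis"
begin

text \<open>Local coordinate model of an n-dimensional spacetime: an open set U of real^'n
 (n = CARD('n)) with metric components g x $ a $ b.  Indices a,b,c,... range over 'n;
 the spacelike frame indices i,j,k range over {2..<n} (nat).\<close>

definition frame_idx :: "'n::finite itself \<Rightarrow> nat set" where
  "frame_idx _ = {2..<CARD('n)}"

definition pd :: "'n::finite \<Rightarrow> (real^'n \<Rightarrow> real) \<Rightarrow> real^'n \<Rightarrow> real" where
  "pd b f x = frechet_derivative f (at x) (axis b 1)"

definition smooth_on :: "(real^'n::finite) set \<Rightarrow> (real^'n \<Rightarrow> real) \<Rightarrow> bool" where
  "smooth_on U f \<longleftrightarrow> (\<forall>ds. \<forall>x\<in>U. (foldr pd ds f) differentiable (at x))"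

definition lorentzian_form :: "real^'n^'n::finite \<Rightarrow> bool" where
  "lorentzian_form G \<longleftrightarrow> (\<forall>a b. G $ a $ b = G $ b $ a) \<and>
     (\<exists>(P::real^'n^'n) t. invertible P \<and>
        transpose P ** G ** P = (\<chi> a b. if a = b then (if a = t then -1 else 1) else 0))"

definition lorentzian_metric :: "(real^'n::finite) set \<Rightarrow> (real^'n \<Rightarrow> real^'n^'n) \<Rightarrow> bool" where
  "lorentzian_metric U g \<longleftrightarrow> (\<forall>x\<in>U. lorentzian_form (g x)) \<and>
     (\<forall>a b. smooth_on U (\<lambda>x. g x $ a $ b))"

definition smooth_vf :: "(real^'n::finite) set \<Rightarrow> (real^'n \<Rightarrow> real^'n) \<Rightarrow> bool" where
  "smooth_vf U v \<longleftrightarrow> (\<forall>a. smooth_on U (\<lambda>x. v x $ a))"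

definition gform :: "real^'n^'n::finite \<Rightarrow> real^'n \<Rightarrow> real^'n \<Rightarrow> real" where
  "gform G u v = (\<Sum>a\<in>UNIV. \<Sum>b\<in>UNIV. G $ a $ b * u $ a * v $ b)"

definition ginv :: "(real^'n::finite \<Rightarrow> real^'n^'n) \<Rightarrow> real^'n \<Rightarrow> real^'n^'n" where
  "ginv g x = matrix_inv (g x)"

definition chr :: "(real^'n::finite \<Rightarrow> real^'n^'n) \<Rightarrow> 'n \<Rightarrow> 'n \<Rightarrow> 'n \<Rightarrow> real^'n \<Rightarrow> real" where
  "chr g c a b x = (1/2) * (\<Sum>d\<in>UNIV. ginv g x $ c $ d *
      (pd a (\<lambda>y. g y $ d $ b) x + pd b (\<lambda>y. g y $ d $ a) x - pd d (\<lambda>y. g y $ a $ b) x))"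

text \<open>Riemann tensor R^a_{bcd}, with [nabla_c, nabla_d] V^a = R^a_{bcd} V^b.\<close>
definition riem_up :: "(real^'n::finite \<Rightarrow> real^'n^'n) \<Rightarrow> 'n \<Rightarrow> 'n \<Rightarrow> 'n \<Rightarrow> 'n \<Rightarrow> real^'n \<Rightarrow> real" where
  "riem_up g a b c d x = pd c (chr g a d b) x - pd d (chr g a c b) x +
     (\<Sum>e\<in>UNIV. chr g a c e x * chr g e d b x - chr g a d e x * chr g e c b x)"

definition riem :: "(real^'n::finite \<Rightarrow> real^'n^'n) \<Rightarrow> 'n \<Rightarrow> 'n \<Rightarrow> 'n \<Rightarrow> 'n \<Rightarrow> real^'n \<Rightarrow> real" where
  "riem g a b c d x = (\<Sum>e\<in>UNIV. g x $ a $ e * riem_up g e b c d x)"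

definition ricci :: "(real^'n::finite \<Rightarrow> real^'n^'n) \<Rightarrow> 'n \<Rightarrow> 'n \<Rightarrow> real^'n \<Rightarrow> real" where
  "ricci g b d x = (\<Sum>a\<in>UNIV. riem_up g a b a d x)"

definition scal :: "(real^'n::finite \<Rightarrow> real^'n^'n) \<Rightarrow> real^'n \<Rightarrow> real" where
  "scal g x = (\<Sum>b\<in>UNIV. \<Sum>d\<in>UNIV. ginv g x $ b $ d * ricci g b d x)"

definition weyl :: "(real^'n::finite \<Rightarrow> real^'n^'n) \<Rightarrow> 'n \<Rightarrow> 'n \<Rightarrow> 'n \<Rightarrow> 'n \<Rightarrow> real^'n \<Rightarrow> real" where
  "weyl g a b c d x = (let N = real CARD('n); G = g x in
     riem g a b c d x
     - (1 / (N - 2)) * (G$a$c * ricci g d b x - G$a$d * ricci g c b x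
                        - G$b$c * ricci g d a x + G$b$d * ricci g c a x)
     + scal g x / ((N - 1) * (N - 2)) * (G$a$c * G$d$b - G$a$d * G$c$b))"

definition lower :: "(real^'n::finite \<Rightarrow> real^'n^'n) \<Rightarrow> (real^'n \<Rightarrow> real^'n) \<Rightarrow> 'n \<Rightarrow> real^'n \<Rightarrow> real" where
  "lower g v a x = (\<Sum>b\<in>UNIV. g x $ a $ b * v x $ b)"

definition cov_low :: "(real^'n::finite \<Rightarrow> real^'n^'n) \<Rightarrow> (real^'n \<Rightarrow> real^'n) \<Rightarrow> 'n \<Rightarrow> 'n \<Rightarrow> real^'n \<Rightarrow> real" where
  "cov_low g v a b x = pd b (lower g v a) x - (\<Sum>c\<in>UNIV. chr g c a b x * lower g v c x)"

definition geodetic :: "(real^'n::finite \<Rightarrow> real^'n^'n) \<Rightarrow> (real^'n) set \<Rightarrow> (real^'n \<Rightarrow> real^'n) \<Rightarrow> bool" where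
  "geodetic g U l \<longleftrightarrow> (\<forall>x\<in>U. \<exists>f::real. \<forall>a.
      (\<Sum>b\<in>UNIV. l x $ b * cov_low g l a b x) = f * lower g l a x)"

definition null_frame :: "real^'n^'n::finite \<Rightarrow> real^'n \<Rightarrow> real^'n \<Rightarrow> (nat \<Rightarrow> real^'n) \<Rightarrow> bool" where
  "null_frame G lv nv m \<longleftrightarrow>
     gform G lv lv = 0 \<and> gform G nv nv = 0 \<and> gform G lv nv = 1 \<and>
     (\<forall>i\<in>frame_idx TYPE('n). gform G lv (m i) = 0 \<and> gform G nv (m i) = 0) \<and>
     (\<forall>i\<in>frame_idx TYPE('n). \<forall>j\<in>frame_idx TYPE('n).
        gform G (m i) (m j) = (if i = j then 1 else 0))"

definition Lij :: "(real^'n::finite \<Rightarrow> real^'n^'n) \<Rightarrow> (real^'n \<Rightarrow> real^'n) \<Rightarrow> (nat \<Rightarrow> real^'n) \<Rightarrow> real^'n \<Rightarrow> nat \<Rightarrow> nat \<Rightarrow> real" where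
  "Lij g l m x i j = (\<Sum>a\<in>UNIV. \<Sum>b\<in>UNIV. cov_low g l a b x * m i $ a * m j $ b)"

definition expansion :: "(real^'n::finite \<Rightarrow> real^'n^'n) \<Rightarrow> (real^'n \<Rightarrow> real^'n) \<Rightarrow> (nat \<Rightarrow> real^'n) \<Rightarrow> real^'n \<Rightarrow> real" where
  "expansion g l m x = (1 / (real CARD('n) - 2)) * (\<Sum>k\<in>frame_idx TYPE('n). Lij g l m x k k)"

definition shear :: "(real^'n::finite \<Rightarrow> real^'n^'n) \<Rightarrow> (real^'n \<Rightarrow> real^'n) \<Rightarrow> (nat \<Rightarrow> real^'n) \<Rightarrow> real^'n \<Rightarrow> nat \<Rightarrow> nat \<Rightarrow> real" where
  "shear g l m x i j = (Lij g l m x i j + Lij g l m x j i) / 2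
      - (if i = j then expansion g l m x else 0)"

definition twist :: "(real^'n::finite \<Rightarrow> real^'n^'n) \<Rightarrow> (real^'n \<Rightarrow> real^'n) \<Rightarrow> (nat \<Rightarrow> real^'n) \<Rightarrow> real^'n \<Rightarrow> nat \<Rightarrow> nat \<Rightarrow> real" where
  "twist g l m x i j = (Lij g l m x i j - Lij g l m x j i) / 2"

definition C0i0j :: "(real^'n::finite \<Rightarrow> real^'n^'n) \<Rightarrow> (real^'n \<Rightarrow> real^'n) \<Rightarrow> (nat \<Rightarrow> real^'n) \<Rightarrow> real^'n \<Rightarrow> nat \<Rightarrow> nat \<Rightarrow> real" where
  "C0i0j g l m x i j = (\<Sum>a\<in>UNIV. \<Sum>b\<in>UNIV. \<Sum>c\<in>UNIV. \<Sum>d\<in>UNIV.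
      weyl g a b c d x * l x $ a * m i $ b * l x $ c * m j $ d)"

definition wand :: "(real^'n::finite \<Rightarrow> real^'n^'n) \<Rightarrow> (real^'n) set \<Rightarrow> (real^'n \<Rightarrow> real^'n) \<Rightarrow> (real^'n \<Rightarrow> nat \<Rightarrow> real^'n) \<Rightarrow> bool" where
  "wand g U l mf \<longleftrightarrow> (\<forall>x\<in>U. \<forall>i\<in>frame_idx TYPE('n). \<forall>j\<in>frame_idx TYPE('n). C0i0j g l (mf x) x i j = 0)"

end

theory Submission
  imports Defs
begin

lemma fd_works: "f differentiable (at x) \<Longrightarrow> (f has_derivative frechet_derivative f (at x)) (at x)"
  using frechet_derivative_works by blast

lemma pd_has: "(f has_derivative f') (at x) \<Longrightarrow> pd b f x = f' (axis b 1)"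
  unfolding pd_def using frechet_derivative_at by metis

lemma pd_const[simp]: "pd b (\<lambda>y. k) x = 0"
  by (rule pd_has[of _ "\<lambda>_. 0", simplified]) simp

lemma pd_add:
  "f differentiable (at x) \<Longrightarrow> h differentiable (at x) \<Longrightarrow>
   pd b (\<lambda>y. f y + h y) x = pd b f x + pd b h x"
  by (subst pd_has[OF has_derivative_add[OF fd_works fd_works]]) (auto simp: pd_def)

lemma pd_diff:
  "f differentiable (at x) \<Longrightarrow> h differentiable (at x) \<Longrightarrow>
   pd b (\<lambda>y. f y - h y) x = pd b f x - pd b h x"
  by (subst pd_has[OF has_derivative_diff[OF fd_works fd_works]]) (auto simp: pd_def)

lemma pd_mult:
  fixes f h :: "real^'n::finite \<Rightarrow> real"
  shows "f differentiable (at x) \<Longrightarrow> h differentiable (at x) \<Longrightarrow>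
   pd b (\<lambda>y. f y * h y) x = pd b f x * h x + f x * pd b h x"
  by (subst pd_has[OF has_derivative_mult[OF fd_works fd_works]]) (auto simp: pd_def)

lemma pd_cmult:
  fixes f :: "real^'n::finite \<Rightarrow> real"
  shows "f differentiable (at x) \<Longrightarrow> pd b (\<lambda>y. k * f y) x = k * pd b f x"
  using pd_mult[of "\<lambda>_. k" x f b] by simp

lemma pd_sum:
  fixes f :: "'i \<Rightarrow> real^'n::finite \<Rightarrow> real"
  shows "(\<And>i. i \<in> I \<Longrightarrow> f i differentiable (at x)) \<Longrightarrow>
   pd b (\<lambda>y. \<Sum>i\<in>I. f i y) x = (\<Sum>i\<in>I. pd b (f i) x)"
  by (subst pd_has[OF has_derivative_sum[OF fd_works]]) (auto simp: pd_def)

lemma pd_local: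
  assumes "open V" "x \<in> V" "\<And>y. y \<in> V \<Longrightarrow> f y = h y"
  shows "pd b f x = pd b h x"
proof -
  have "\<And>D. (f has_derivative D) (at x) \<longleftrightarrow> (h has_derivative D) (at x)"
    using has_derivative_transform_within_open[OF _ assms(1,2), of f _ UNIV h]
          has_derivative_transform_within_open[OF _ assms(1,2), of h _ UNIV f] assms(3)
    by metis
  then show ?thesis unfolding pd_def frechet_derivative_def by simp
qed

lemma diff_local:
  assumes "open V" "x \<in> V" "\<And>y. y \<in> V \<Longrightarrow> f y = h y" "f differentiable (at x)"
  shows "h differentiable (at x)"
  using assms unfolding differentiable_def
  using has_derivative_transform_within_open[OF _ assms(1,2), of f _ UNIV h] by metis

lemma dir_deriv:
  fixes F :: "real^'n::finite \<Rightarrow> real"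
  assumes "F differentiable (at (p + s *\<^sub>R w))"
  shows "((\<lambda>t. F (p + t *\<^sub>R w)) has_real_derivative frechet_derivative F (at (p + s *\<^sub>R w)) w) (at s)"
proof -
  let ?F' = "frechet_derivative F (at (p + s *\<^sub>R w))"
  have i: "((\<lambda>t. p + t *\<^sub>R w) has_derivative (\<lambda>t. t *\<^sub>R w)) (at s)"
    by (auto intro!: derivative_eq_intros)
  have c: "((\<lambda>t. F (p + t *\<^sub>R w)) has_derivative (\<lambda>t. ?F' (t *\<^sub>R w))) (at s)"
    using has_derivative_compose[OF i fd_works[OF assms]] .
  have lin: "linear ?F'" using fd_works[OF assms] has_derivative_linear by blast
  have "(\<lambda>t. ?F' (t *\<^sub>R w)) = (\<lambda>t. ?F' w * t)"
    using linear_scale[OF lin] by (auto simp: mult.commute)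
  with c show ?thesis unfolding has_field_derivative_def by simp
qed

lemma schwarz:
  fixes f :: "real^'n::finite \<Rightarrow> real"
  assumes U: "open U" "x \<in> U"
    and d1: "\<And>y. y\<in>U \<Longrightarrow> f differentiable (at y)"
    and d2c: "\<And>y. y\<in>U \<Longrightarrow> pd c f differentiable (at y)"
    and d2d: "\<And>y. y\<in>U \<Longrightarrow> pd d f differentiable (at y)"
    and cc: "continuous (at x) (pd d (pd c f))" and cd: "continuous (at x) (pd c (pd d f))"
  shows "pd d (pd c f) x = pd c (pd d f) x"
proof -
  obtain r where r: "r > 0" "ball x r \<subseteq> U" using U open_contains_ball by blast
  let ?u = "axis c (1::real)" and ?v = "axis d (1::real)"
  have nu: "norm ?u = 1" "norm ?v = 1" by simp_all
  have inb: "x + s *\<^sub>R ?u + t *\<^sub>R ?v \<in> U" if "0 \<le> s" "s \<le> h" "0 \<le> t" "t \<le> h" "h < r/2" for s t h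
  proof -
    have "norm (s *\<^sub>R ?u + t *\<^sub>R ?v) \<le> norm (s *\<^sub>R ?u) + norm (t *\<^sub>R ?v)" by (rule norm_triangle_ineq)
    also have "\<dots> = s + t" using nu that by simp
    finally have "norm (s *\<^sub>R ?u + t *\<^sub>R ?v) < r" using that by simp
    moreover have "dist x (x + (s *\<^sub>R ?u + t *\<^sub>R ?v)) = norm (s *\<^sub>R ?u + t *\<^sub>R ?v)"
      by (metis add_diff_cancel_left' dist_norm dist_commute)
    ultimately show ?thesis using r by (auto simp: add.assoc)
  qed
  have key: "\<exists>s t. 0 < s \<and> s < h \<and> 0 < t \<and> t < h \<and>
      f (x + h *\<^sub>R ?u + h *\<^sub>R ?v) - f (x + h *\<^sub>R ?u) - f (x + h *\<^sub>R ?v) + f x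
        = h * h * pd e (pd a f) (x + s *\<^sub>R axis a 1 + t *\<^sub>R axis e 1)"
    if h: "0 < h" "h < r/2" and ae: "(a = c \<and> e = d) \<or> (a = d \<and> e = c)" for h a e
  proof -
    let ?a = "axis a (1::real)" and ?e = "axis e (1::real)"
    have inb2: "x + s *\<^sub>R ?a + t *\<^sub>R ?e \<in> U" if "0 \<le> s" "s \<le> h" "0 \<le> t" "t \<le> h" for s t
      using ae inb[OF that h(2)] inb[OF that(3,4,1,2) h(2)] by (auto simp: algebra_simps)
    have da: "\<And>y. y\<in>U \<Longrightarrow> pd a f differentiable (at y)" using ae d2c d2d by blast
    define \<phi> where "\<phi> s = f ((x + h *\<^sub>R ?e) + s *\<^sub>R ?a) - f (x + s *\<^sub>R ?a)" for s
    have "\<exists>z. 0 < z \<and> z < h \<and> \<phi> h - \<phi> 0 = (h - 0) *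
          (pd a f ((x + h *\<^sub>R ?e) + z *\<^sub>R ?a) - pd a f (x + z *\<^sub>R ?a))"
    proof (rule MVT2[OF h(1)])
      fix s assume s: "0 \<le> s" "s \<le> h"
      have m1: "(x + h *\<^sub>R ?e) + s *\<^sub>R ?a \<in> U" using inb2[OF s, of h] h by (simp add: algebra_simps)
      have m2: "x + s *\<^sub>R ?a \<in> U" using inb2[OF s, of 0] h by simp
      show "DERIV \<phi> s :> (pd a f ((x + h *\<^sub>R ?e) + s *\<^sub>R ?a) - pd a f (x + s *\<^sub>R ?a))"
        unfolding \<phi>_def pd_def
        by (intro DERIV_diff dir_deriv d1 m1 m2)
    qed
    then obtain s where s: "0 < s" "s < h" and
      sv: "\<phi> h - \<phi> 0 = h * (pd a f ((x + s *\<^sub>R ?a) + h *\<^sub>R ?e) - pd a f ((x + s *\<^sub>R ?a) + 0 *\<^sub>R ?e))"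
      by (auto simp: algebra_simps)
    have "\<exists>z. 0 < z \<and> z < h \<and> pd a f ((x + s *\<^sub>R ?a) + h *\<^sub>R ?e) - pd a f ((x + s *\<^sub>R ?a) + 0 *\<^sub>R ?e)
        = (h - 0) * pd e (pd a f) ((x + s *\<^sub>R ?a) + z *\<^sub>R ?e)"
    proof (rule MVT2[OF h(1)])
      fix t assume t: "0 \<le> t" "t \<le> h"
      have m: "(x + s *\<^sub>R ?a) + t *\<^sub>R ?e \<in> U" using inb2[of s t] s t by simp
      show "DERIV (\<lambda>t. pd a f ((x + s *\<^sub>R ?a) + t *\<^sub>R ?e)) t :> pd e (pd a f) ((x + s *\<^sub>R ?a) + t *\<^sub>R ?e)"
        using dir_deriv[of "pd a f" "x + s *\<^sub>R ?a" t ?e] da[OF m] unfolding pd_def[of e] by blast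
    qed
    then obtain t where t: "0 < t" "t < h" and
      tv: "pd a f ((x + s *\<^sub>R ?a) + h *\<^sub>R ?e) - pd a f ((x + s *\<^sub>R ?a) + 0 *\<^sub>R ?e)
        = h * pd e (pd a f) ((x + s *\<^sub>R ?a) + t *\<^sub>R ?e)" by auto
    have "f (x + h *\<^sub>R ?u + h *\<^sub>R ?v) - f (x + h *\<^sub>R ?u) - f (x + h *\<^sub>R ?v) + f x = \<phi> h - \<phi> 0"
      using ae unfolding \<phi>_def by (auto simp: algebra_simps)
    also have "\<dots> = h * h * pd e (pd a f) (x + s *\<^sub>R ?a + t *\<^sub>R ?e)" using sv tv by simp
    finally show ?thesis using s t by blast
  qed
  show ?thesis
  proof (rule ccontr)
    assume ne: "pd d (pd c f) x \<noteq> pd c (pd d f) x"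
    define \<epsilon> where "\<epsilon> = \<bar>pd d (pd c f) x - pd c (pd d f) x\<bar> / 2"
    have ep: "\<epsilon> > 0" using ne by (simp add: \<epsilon>_def)
    obtain \<delta>1 where d1: "\<delta>1 > 0" "\<And>y. dist y x < \<delta>1 \<Longrightarrow> dist (pd d (pd c f) y) (pd d (pd c f) x) < \<epsilon>"
      using cc ep unfolding continuous_at_eps_delta by blast
    obtain \<delta>2 where d2: "\<delta>2 > 0" "\<And>y. dist y x < \<delta>2 \<Longrightarrow> dist (pd c (pd d f) y) (pd c (pd d f) x) < \<epsilon>"
      using cd ep unfolding continuous_at_eps_delta by blast
    define h where "h = min (r/4) (min (\<delta>1/4) (\<delta>2/4))"
    have h: "0 < h" "h < r/2" "2*h < \<delta>1" "2*h < \<delta>2" using r d1 d2 by (auto simp: h_def)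
    have close: "dist (x + s *\<^sub>R axis a 1 + t *\<^sub>R axis e 1) x < 2*h" if "0 < s" "s < h" "0 < t" "t < h" for s t a e
    proof -
      have "norm (s *\<^sub>R axis a (1::real) + t *\<^sub>R axis e 1) \<le> norm (s *\<^sub>R axis a (1::real)) + norm (t *\<^sub>R axis e (1::real))"
        by (rule norm_triangle_ineq)
      also have "\<dots> = s + t" using that by simp
      moreover have "dist (x + (s *\<^sub>R axis a (1::real) + t *\<^sub>R axis e 1)) x = norm (s *\<^sub>R axis a (1::real) + t *\<^sub>R axis e 1)"
        by (metis add_diff_cancel_left' dist_norm)
      ultimately show ?thesis using that by (simp add: add.assoc)
    qed
    obtain s1 t1 where st1: "0 < s1" "s1 < h" "0 < t1" "t1 < h"
      "f (x + h *\<^sub>R ?u + h *\<^sub>R ?v) - f (x + h *\<^sub>R ?u) - f (x + h *\<^sub>R ?v) + f x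
        = h * h * pd d (pd c f) (x + s1 *\<^sub>R ?u + t1 *\<^sub>R ?v)"
      using key[OF h(1,2), of c d] by auto
    obtain s2 t2 where st2: "0 < s2" "s2 < h" "0 < t2" "t2 < h"
      "f (x + h *\<^sub>R ?u + h *\<^sub>R ?v) - f (x + h *\<^sub>R ?u) - f (x + h *\<^sub>R ?v) + f x
        = h * h * pd c (pd d f) (x + s2 *\<^sub>R ?v + t2 *\<^sub>R ?u)"
      using key[OF h(1,2), of d c] by auto
    have eq: "pd d (pd c f) (x + s1 *\<^sub>R ?u + t1 *\<^sub>R ?v) = pd c (pd d f) (x + s2 *\<^sub>R ?v + t2 *\<^sub>R ?u)"
      using st1(5) st2(5) h(1) by simp
    have a1: "dist (pd d (pd c f) (x + s1 *\<^sub>R ?u + t1 *\<^sub>R ?v)) (pd d (pd c f) x) < \<epsilon>"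
      using d1(2) close[OF st1(1-4), of c d] h by simp
    have a2: "dist (pd c (pd d f) (x + s2 *\<^sub>R ?v + t2 *\<^sub>R ?u)) (pd c (pd d f) x) < \<epsilon>"
      using d2(2) close[OF st2(1-4), of d c] h by simp
    have ar: "\<And>(A::real) (B::real) (X::real) (Y::real). \<bar>A - X\<bar> < \<bar>X - Y\<bar>/2 \<Longrightarrow> \<bar>B - Y\<bar> < \<bar>X - Y\<bar>/2 \<Longrightarrow> A = B \<Longrightarrow> False"
      by (simp add: abs_if split: if_splits)
    from a1 a2 eq show False unfolding \<epsilon>_def dist_real_def by (rule ar)
  qed
qed

lemma inv_props:
  fixes A :: "real^'n::finite^'n"
  assumes "invertible A"
  shows "A ** matrix_inv A = mat 1" "matrix_inv A ** A = mat 1"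
proof -
  have "\<exists>A'. A ** A' = mat 1 \<and> A' ** A = mat 1" using assms unfolding invertible_def by blast
  then have "A ** matrix_inv A = mat 1 \<and> matrix_inv A ** A = mat 1"
    unfolding matrix_inv_def by (rule someI_ex)
  then show "A ** matrix_inv A = mat 1" "matrix_inv A ** A = mat 1" by auto
qed

lemma inv_entries:
  fixes A :: "real^'n::finite^'n"
  assumes "invertible A"
  shows "(\<Sum>k\<in>UNIV. A$i$k * matrix_inv A $k$j) = (if i = j then 1 else 0)"
        "(\<Sum>k\<in>UNIV. matrix_inv A $i$k * A $k$j) = (if i = j then 1 else 0)"
proof -
  have "(A ** matrix_inv A) $i$j = mat 1 $i$j" "(matrix_inv A ** A) $i$j = mat 1 $i$j"
    using inv_props[OF assms] by simp_all
  then show "(\<Sum>k\<in>UNIV. A$i$k * matrix_inv A $k$j) = (if i = j then 1 else 0)"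
        "(\<Sum>k\<in>UNIV. matrix_inv A $i$k * A $k$j) = (if i = j then 1 else 0)"
    by (simp_all add: matrix_matrix_mult_def mat_def)
qed

lemma lorentzian_det:
  fixes G :: "real^'n::finite^'n"
  assumes "lorentzian_form G"
  shows "det G \<noteq> 0" "invertible G" "\<And>a b. G$a$b = G$b$a"
proof -
  obtain P :: "real^'n^'n" and t where P: "invertible P"
    "transpose P ** G ** P = (\<chi> a b. if a = b then (if a = t then -1 else 1) else 0)"
    using assms unfolding lorentzian_form_def by blast
  let ?D = "(\<chi> a b. if a = b then (if a = t then -1 else 1) else 0) :: real^'n^'n"
  have "det ?D = (\<Prod>i\<in>UNIV. ?D$i$i)" by (rule det_diagonal) simp
  also have "\<dots> \<noteq> 0" by (simp add: prod_zero_iff)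
  finally have "det ?D \<noteq> 0" .
  then have "det (transpose P ** G ** P) \<noteq> 0" using P(2) by simp
  then have "det (transpose P) * det G * det P \<noteq> 0" by (metis det_mul)
  then show "det G \<noteq> 0" by auto
  then show "invertible G" by (simp add: invertible_det_nz)
  show "\<And>a b. G$a$b = G$b$a" using assms unfolding lorentzian_form_def by blast
qed

lemma matrix_inv_cramer:
  fixes A :: "real^'n::finite^'n"
  assumes d: "det A \<noteq> 0"
  shows "matrix_inv A $ k $ j = det (\<chi> r s. if s = k then (if r = j then 1 else 0) else A$r$s) / det A"
proof -
  have inv: "invertible A" using d by (simp add: invertible_det_nz)
  define x where "x = (\<chi> k. matrix_inv A $ k $ j)"
  have "A *v x = (\<chi> r. if r = j then 1 else 0)"
    using inv_entries(1)[OF inv] by (simp add: x_def matrix_vector_mult_def vec_eq_iff)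
  then have "x = (\<chi> k. det(\<chi> i j'. if j'=k then (\<chi> r. if r = j then (1::real) else 0)$i else A$i$j') / det A)"
    using cramer[OF d] by blast
  then have "x $ k = det(\<chi> i j'. if j'=k then (\<chi> r. if r = j then (1::real) else 0)$i else A$i$j') / det A"
    by simp
  moreover have "(\<chi> i j'. if j'=k then (\<chi> r. if r = j then (1::real) else 0)$i else A$i$j') = (\<chi> r s. if s = k then (if r = j then 1 else 0) else A$r$s)"
    by (simp add: vec_eq_iff)
  ultimately show ?thesis by (simp add: x_def)
qed

lemma differentiable_prod':
  fixes f :: "'i \<Rightarrow> real^'n::finite \<Rightarrow> real"
  shows "(\<And>i. i \<in> I \<Longrightarrow> f i differentiable (at x)) \<Longrightarrow> (\<lambda>y. \<Prod>i\<in>I. f i y) differentiable (at x)"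
proof -
  assume "\<And>i. i \<in> I \<Longrightarrow> f i differentiable (at x)"
  then have "\<forall>i\<in>I. \<exists>D. (f i has_derivative D) (at x)" unfolding differentiable_def by blast
  then obtain D where "\<forall>i\<in>I. (f i has_derivative D i) (at x)" by metis
  then have "((\<lambda>y. \<Prod>i\<in>I. f i y) has_derivative (\<lambda>y. \<Sum>i\<in>I. D i y * (\<Prod>j\<in>I - {i}. f j x))) (at x)"
    by (intro has_derivative_prod) auto
  then show ?thesis unfolding differentiable_def by blast
qed

lemma det_differentiable:
  fixes M :: "real^'n::finite \<Rightarrow> real^'m::finite^'m"
  assumes "\<And>i j. (\<lambda>y. M y $ i $ j) differentiable (at x)"
  shows "(\<lambda>y. det (M y)) differentiable (at x)"
  unfolding det_def
proof (rule differentiable_sum)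
  show "finite {p. p permutes (UNIV::'m set)}" by (simp add: finite_permutations)
  show "\<forall>p\<in>{p. p permutes UNIV}. (\<lambda>y. of_int (sign p) * (\<Prod>i\<in>UNIV. M y $ i $ p i)) differentiable (at x)"
    by (intro ballI differentiable_mult differentiable_const differentiable_prod' assms)
qed

lemma inv_differentiable:
  fixes M :: "real^'n::finite \<Rightarrow> real^'m::finite^'m"
  assumes "\<And>i j. (\<lambda>y. M y $ i $ j) differentiable (at x)" "det (M x) \<noteq> 0"
  and "open V" "x \<in> V" "\<And>y. y \<in> V \<Longrightarrow> det (M y) \<noteq> 0"
  shows "(\<lambda>y. matrix_inv (M y) $ k $ j) differentiable (at x)"
proof (rule diff_local[OF assms(3,4)])
  show "(\<lambda>y. det (\<chi> r s. if s = k then (if r = j then 1 else 0) else M y$r$s) / det (M y)) differentiable (at x)"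
  proof (intro differentiable_divide det_differentiable assms(2))
    fix r s show "(\<lambda>y. (\<chi> r s. if s = k then (if r = j then 1 else 0) else M y$r$s) $ r $ s) differentiable (at x)"
      by (cases "s = k") (auto intro: assms(1))
  qed (rule assms(1))
  show "\<And>y. y \<in> V \<Longrightarrow> det (\<chi> r s. if s = k then (if r = j then 1 else 0) else M y$r$s) / det (M y)
      = matrix_inv (M y) $ k $ j"
  proof -
    fix y assume "y \<in> V"
    then show "det (\<chi> r s. if s = k then (if r = j then 1 else 0) else M y$r$s) / det (M y)
      = matrix_inv (M y) $ k $ j"
      using matrix_inv_cramer[of "M y" k j] assms(5) by simp
  qed
qed

lemma gform_inner: "gform G u v = inner u (G *v v)"
  unfolding gform_def inner_vec_def matrix_vector_mult_def
  by (simp add: sum_distrib_left mult_ac)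

lemma gform_add2: "gform G u (v + w) = gform G u v + gform G u w"
  unfolding gform_def by (simp add: algebra_simps sum.distrib)
lemma gform_scale2: "gform G u (r *\<^sub>R v) = r * gform G u v"
  unfolding gform_def by (simp add: sum_distrib_left mult_ac)
lemma gform_zero2: "gform G u 0 = 0"
  unfolding gform_def by simp
lemma gform_sum2: "gform G u (\<Sum>k\<in>K. f k) = (\<Sum>k\<in>K. gform G u (f k))"
  by (induction K rule: infinite_finite_induct) (auto simp: gform_add2 gform_zero2)
lemma gform_sym: "(\<And>a b. G$a$b = G$b$a) \<Longrightarrow> gform G u v = gform G v u"
  unfolding gform_def by (subst sum.swap) (simp add: mult_ac)

lemma frame_complete:
  fixes G :: "real^'n::finite^'n" and lv nv :: "real^'n" and m :: "nat \<Rightarrow> real^'n"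
  assumes sym: "\<And>a b. G$a$b = G$b$a" and N: "CARD('n) \<ge> 2" and fr: "null_frame G lv nv m"
  shows "v = gform G nv v *\<^sub>R lv + gform G lv v *\<^sub>R nv + (\<Sum>k\<in>frame_idx TYPE('n). gform G (m k) v *\<^sub>R m k)"
proof -
  let ?N = "CARD('n)"
  define e where "e k = (if k = 0 then lv else if k = 1 then nv else m k)" for k
  define e' where "e' k = (if k = 0 then nv else if k = 1 then lv else m k)" for k
  have fr': "gform G lv lv = 0" "gform G nv nv = 0" "gform G lv nv = 1"
     "\<And>i. i\<in>frame_idx TYPE('n) \<Longrightarrow> gform G lv (m i) = 0 \<and> gform G nv (m i) = 0"
     "\<And>i j. i\<in>frame_idx TYPE('n) \<Longrightarrow> j\<in>frame_idx TYPE('n) \<Longrightarrow> gform G (m i) (m j) = (if i = j then 1 else 0)"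
    using fr unfolding null_frame_def by auto
  have FI: "frame_idx TYPE('n) = {2..<?N}" by (simp add: frame_idx_def)
  have gram: "gform G (e' j) (e k) = (if j = k then 1 else 0)" if "j < ?N" "k < ?N" for j k
  proof -
    have s: "gform G u w = gform G w u" for u w using gform_sym[OF sym] .
    show ?thesis
      using that fr' s[of nv lv] s[of "m j" lv] s[of "m j" nv] FI
      by (cases "j = 0"; cases "j = 1"; cases "k = 0"; cases "k = 1") (auto simp: e_def e'_def)
  qed
  obtain h where h: "bij_betw h {0..<?N} (UNIV::'n set)"
    using ex_bij_betw_nat_finite[of "UNIV::'n set"] by auto
  define hi where "hi = inv_into {0..<?N} h"
  have hi: "hi a < ?N" "h (hi a) = a" for a
    using h unfolding hi_def bij_betw_def by (metis UNIV_I atLeastLessThan_iff inv_into_into, metis UNIV_I f_inv_into_f)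
  have hiinj: "hi a = hi b \<Longrightarrow> a = b" for a b using hi(2) by metis
  define A where "A c = (\<Sum>a\<in>UNIV. (c$a) *\<^sub>R e (hi a))" for c :: "real^'n"
  have linA: "linear A"
    by (rule linearI) (simp_all add: A_def scaleR_add_left sum.distrib scaleR_sum_right)
  have coef: "gform G (e' (hi b)) (A c) = c $ b" for b c
  proof -
    have "gform G (e' (hi b)) (A c) = (\<Sum>a\<in>UNIV. c$a * gform G (e' (hi b)) (e (hi a)))"
      by (simp add: A_def gform_sum2 gform_scale2)
    also have "\<dots> = (\<Sum>a\<in>UNIV. c$a * (if b = a then 1 else 0))"
      by (rule sum.cong) (auto simp: gram hi hiinj)
    also have "\<dots> = c $ b" by (simp add: if_distrib cong: if_cong)
    finally show ?thesis .
  qed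
  have "inj A"
    unfolding linear_injective_0[OF linA]
  proof (intro allI impI)
    fix c assume "A c = 0"
    then show "c = 0" by (metis coef gform_zero2 vec_eq_iff zero_index)
  qed
  then have "surj A" using linA linear_injective_imp_surjective by blast
  then obtain c where c: "v = A c" by blast
  have "v = (\<Sum>a\<in>UNIV. gform G (e' (hi a)) v *\<^sub>R e (hi a))"
    using c coef by (simp add: A_def)
  also have "\<dots> = (\<Sum>k\<in>{0..<?N}. gform G (e' k) v *\<^sub>R e k)"
  proof -
    have "bij_betw hi UNIV {0..<?N}" unfolding hi_def using h bij_betw_inv_into by blast
    then show ?thesis by (rule sum.reindex_bij_betw)
  qed
  also have "{0..<?N} = {0,1} \<union> {2..<?N}" using N by auto
  also have "(\<Sum>k\<in>{0,1} \<union> {2..<?N}. gform G (e' k) v *\<^sub>R e k) =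
     gform G nv v *\<^sub>R lv + gform G lv v *\<^sub>R nv + (\<Sum>k\<in>{2..<?N}. gform G (m k) v *\<^sub>R m k)"
    by (subst sum.union_disjoint) (auto simp: e_def e'_def)
  finally show ?thesis by (simp add: FI)
qed

lemma ricci_alg:
  fixes \<Gamma> :: "'n::finite \<Rightarrow> 'n \<Rightarrow> 'n \<Rightarrow> real" and D\<Gamma> :: "'n \<Rightarrow> 'n \<Rightarrow> 'n \<Rightarrow> 'n \<Rightarrow> real"
    and lam :: "'n \<Rightarrow> real" and Dl :: "'n \<Rightarrow> 'n \<Rightarrow> real" and DDl :: "'n \<Rightarrow> 'n \<Rightarrow> 'n \<Rightarrow> real"
  assumes sym\<Gamma>: "\<And>e a b. \<Gamma> e a b = \<Gamma> e b a" and symD\<Gamma>: "\<And>c e a b. D\<Gamma> c e a b = D\<Gamma> c e b a"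
    and symDD: "\<And>c d b. DDl c d b = DDl d c b"
  shows "let L = (\<lambda>b d. Dl d b - (\<Sum>e\<in>UNIV. \<Gamma> e b d * lam e));
             DL = (\<lambda>c b d. DDl c d b - (\<Sum>e\<in>UNIV. D\<Gamma> c e b d * lam e + \<Gamma> e b d * Dl c e));
             T = (\<lambda>b d c. DL c b d - (\<Sum>e\<in>UNIV. \<Gamma> e c b * L e d) - (\<Sum>e\<in>UNIV. \<Gamma> e c d * L b e))
         in T b d c - T b c d = - (\<Sum>f\<in>UNIV. lam f * (D\<Gamma> c f d b - D\<Gamma> d f c b +
                 (\<Sum>e\<in>UNIV. \<Gamma> f c e * \<Gamma> e d b - \<Gamma> f d e * \<Gamma> e c b)))"
proof -
  have sw: "(\<Sum>e\<in>UNIV. \<Gamma> e p b * (\<Sum>f\<in>UNIV. \<Gamma> f e q * lam f)) = (\<Sum>f\<in>UNIV. lam f * (\<Sum>e\<in>UNIV. \<Gamma> f q e * \<Gamma> e p b))" for p q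
  proof -
    have "(\<Sum>e\<in>UNIV. \<Gamma> e p b * (\<Sum>f\<in>UNIV. \<Gamma> f e q * lam f)) = (\<Sum>e\<in>UNIV. \<Sum>f\<in>UNIV. \<Gamma> e p b * (\<Gamma> f e q * lam f))"
      by (simp add: sum_distrib_left)
    also have "\<dots> = (\<Sum>f\<in>UNIV. \<Sum>e\<in>UNIV. \<Gamma> e p b * (\<Gamma> f e q * lam f))" by (rule sum.swap)
    also have "\<dots> = (\<Sum>f\<in>UNIV. lam f * (\<Sum>e\<in>UNIV. \<Gamma> f q e * \<Gamma> e p b))"
      by (simp add: sum_distrib_left sym\<Gamma>[of _ _ q] mult_ac)
    finally show ?thesis .
  qed
  have e1: "(\<Sum>e\<in>UNIV. \<Gamma> e c b * (Dl d e - (\<Sum>f\<in>UNIV. \<Gamma> f e d * lam f)))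
     = (\<Sum>e\<in>UNIV. \<Gamma> e c b * Dl d e) - (\<Sum>f\<in>UNIV. lam f * (\<Sum>e\<in>UNIV. \<Gamma> f d e * \<Gamma> e c b))"
    using sw[of c d] by (simp add: right_diff_distrib sum_subtractf)
  have e2: "(\<Sum>e\<in>UNIV. \<Gamma> e d b * (Dl c e - (\<Sum>f\<in>UNIV. \<Gamma> f e c * lam f)))
     = (\<Sum>e\<in>UNIV. \<Gamma> e d b * Dl c e) - (\<Sum>f\<in>UNIV. lam f * (\<Sum>e\<in>UNIV. \<Gamma> f c e * \<Gamma> e d b))"
    using sw[of d c] by (simp add: right_diff_distrib sum_subtractf)
  have e3: "(\<Sum>e\<in>UNIV. \<Gamma> e c d * (Dl e b - (\<Sum>f\<in>UNIV. \<Gamma> f b e * lam f)))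
          = (\<Sum>e\<in>UNIV. \<Gamma> e d c * (Dl e b - (\<Sum>f\<in>UNIV. \<Gamma> f b e * lam f)))"
    by (simp add: sym\<Gamma>[of _ c d])
  have e4: "(\<Sum>e\<in>UNIV. D\<Gamma> c e b d * lam e + \<Gamma> e b d * Dl c e) = (\<Sum>e\<in>UNIV. lam e * D\<Gamma> c e d b) + (\<Sum>e\<in>UNIV. \<Gamma> e d b * Dl c e)"
    by (simp add: sum.distrib symD\<Gamma>[of c _ b d] sym\<Gamma>[of _ b d] mult_ac)
  have e5: "(\<Sum>e\<in>UNIV. D\<Gamma> d e b c * lam e + \<Gamma> e b c * Dl d e) = (\<Sum>e\<in>UNIV. lam e * D\<Gamma> d e c b) + (\<Sum>e\<in>UNIV. \<Gamma> e c b * Dl d e)"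
    by (simp add: sum.distrib symD\<Gamma>[of d _ b c] sym\<Gamma>[of _ b c] mult_ac)
  have rhs: "(\<Sum>f\<in>UNIV. lam f * (D\<Gamma> c f d b - D\<Gamma> d f c b + (\<Sum>e\<in>UNIV. \<Gamma> f c e * \<Gamma> e d b - \<Gamma> f d e * \<Gamma> e c b)))
     = (\<Sum>f\<in>UNIV. lam f * D\<Gamma> c f d b) - (\<Sum>f\<in>UNIV. lam f * D\<Gamma> d f c b)
       + (\<Sum>f\<in>UNIV. lam f * (\<Sum>e\<in>UNIV. \<Gamma> f c e * \<Gamma> e d b)) - (\<Sum>f\<in>UNIV. lam f * (\<Sum>e\<in>UNIV. \<Gamma> f d e * \<Gamma> e c b))"
    by (simp add: algebra_simps sum.distrib sum_subtractf)
  show ?thesis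
    unfolding Let_def rhs
    using symDD[of c d b] e1 e2 e3 e4 e5
    by (simp add: algebra_simps)
qed

lemma antisym_alg:
  fixes G :: "'n::finite \<Rightarrow> 'n \<Rightarrow> real" and \<Gamma> :: "'n \<Rightarrow> 'n \<Rightarrow> 'n \<Rightarrow> real"
    and D\<Gamma> :: "'n \<Rightarrow> 'n \<Rightarrow> 'n \<Rightarrow> 'n \<Rightarrow> real" and dG :: "'n \<Rightarrow> 'n \<Rightarrow> 'n \<Rightarrow> real"
    and ddG :: "'n \<Rightarrow> 'n \<Rightarrow> 'n \<Rightarrow> 'n \<Rightarrow> real"
  assumes symG: "\<And>a b. G a b = G b a"
    and symdG: "\<And>c a b. dG c a b = dG c b a"
    and symdd1: "\<And>c d a b. ddG c d a b = ddG d c a b"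
    and symdd2: "\<And>c d a b. ddG c d a b = ddG c d b a"
    and h\<Gamma>l: "\<And>a d b. (\<Sum>e\<in>UNIV. G a e * \<Gamma> e d b) = (dG d a b + dG b a d - dG a d b) / 2"
    and hD: "\<And>a c d b. (\<Sum>e\<in>UNIV. G a e * D\<Gamma> c e d b) =
              (ddG c d a b + ddG c b a d - ddG c a d b) / 2 - (\<Sum>e\<in>UNIV. dG c a e * \<Gamma> e d b)"
  shows "let R = (\<lambda>e b c d. D\<Gamma> c e d b - D\<Gamma> d e c b + (\<Sum>h\<in>UNIV. \<Gamma> e c h * \<Gamma> h d b - \<Gamma> e d h * \<Gamma> h c b))
         in (\<Sum>e\<in>UNIV. G a e * R e b c d) = - (\<Sum>e\<in>UNIV. G b e * R e a c d)"
proof -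
  define \<Gamma>l where "\<Gamma>l a d b = (\<Sum>e\<in>UNIV. G a e * \<Gamma> e d b)" for a d b
  have compat: "dG c a e = \<Gamma>l a c e + \<Gamma>l e c a" for c a e
    unfolding \<Gamma>l_def h\<Gamma>l using symdG[of c a e] symdG[of e a c] symdG[of a e c] by (simp add: field_simps)
  define Q where "Q c a d b = (\<Sum>e\<in>UNIV. \<Gamma>l e c a * \<Gamma> e d b)" for c a d b
  have Qsym: "Q c a d b = Q d b c a" for c a d b
  proof -
    have "Q c a d b = (\<Sum>e\<in>UNIV. \<Sum>f\<in>UNIV. G e f * \<Gamma> f c a * \<Gamma> e d b)"
      by (simp add: Q_def \<Gamma>l_def sum_distrib_right)
    also have "\<dots> = (\<Sum>f\<in>UNIV. \<Sum>e\<in>UNIV. G e f * \<Gamma> f c a * \<Gamma> e d b)" by (rule sum.swap)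
    also have "\<dots> = (\<Sum>f\<in>UNIV. \<Sum>e\<in>UNIV. G f e * \<Gamma> e d b * \<Gamma> f c a)"
      by (simp add: symG mult_ac)
    also have "\<dots> = Q d b c a"
      by (simp add: Q_def \<Gamma>l_def sum_distrib_right)
    finally show ?thesis .
  qed
  have main: "(\<Sum>e\<in>UNIV. G a e * (D\<Gamma> c e d b - D\<Gamma> d e c b + (\<Sum>h\<in>UNIV. \<Gamma> e c h * \<Gamma> h d b - \<Gamma> e d h * \<Gamma> h c b)))
     = (ddG c d a b + ddG c b a d - ddG c a d b - ddG d c a b - ddG d b a c + ddG d a c b) / 2
       - Q c a d b + Q d a c b" for a b c d
  proof -
    have s1: "(\<Sum>e\<in>UNIV. G a e * (\<Sum>h\<in>UNIV. \<Gamma> e c h * \<Gamma> h d b - \<Gamma> e d h * \<Gamma> h c b))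
        = (\<Sum>h\<in>UNIV. \<Gamma>l a c h * \<Gamma> h d b) - (\<Sum>h\<in>UNIV. \<Gamma>l a d h * \<Gamma> h c b)"
    proof -
      have "(\<Sum>e\<in>UNIV. G a e * (\<Sum>h\<in>UNIV. \<Gamma> e c h * \<Gamma> h d b - \<Gamma> e d h * \<Gamma> h c b))
         = (\<Sum>e\<in>UNIV. \<Sum>h\<in>UNIV. G a e * \<Gamma> e c h * \<Gamma> h d b - G a e * \<Gamma> e d h * \<Gamma> h c b)"
        by (simp add: sum_distrib_left algebra_simps)
      also have "\<dots> = (\<Sum>h\<in>UNIV. \<Sum>e\<in>UNIV. G a e * \<Gamma> e c h * \<Gamma> h d b - G a e * \<Gamma> e d h * \<Gamma> h c b)"
        by (rule sum.swap)
      also have "\<dots> = (\<Sum>h\<in>UNIV. \<Gamma>l a c h * \<Gamma> h d b) - (\<Sum>h\<in>UNIV. \<Gamma>l a d h * \<Gamma> h c b)"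
        by (simp add: \<Gamma>l_def sum_subtractf sum_distrib_right)
      finally show ?thesis .
    qed
    have s2: "(\<Sum>e\<in>UNIV. dG c a e * \<Gamma> e d b) = (\<Sum>e\<in>UNIV. \<Gamma>l a c e * \<Gamma> e d b) + Q c a d b" for c d
      by (simp add: compat Q_def algebra_simps sum.distrib)
    have "(\<Sum>e\<in>UNIV. G a e * (D\<Gamma> c e d b - D\<Gamma> d e c b + (\<Sum>h\<in>UNIV. \<Gamma> e c h * \<Gamma> h d b - \<Gamma> e d h * \<Gamma> h c b)))
       = (\<Sum>e\<in>UNIV. G a e * D\<Gamma> c e d b) - (\<Sum>e\<in>UNIV. G a e * D\<Gamma> d e c b)
         + (\<Sum>e\<in>UNIV. G a e * (\<Sum>h\<in>UNIV. \<Gamma> e c h * \<Gamma> h d b - \<Gamma> e d h * \<Gamma> h c b))"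
      by (simp add: algebra_simps sum.distrib sum_subtractf)
    also have "\<dots> = (ddG c d a b + ddG c b a d - ddG c a d b - ddG d c a b - ddG d b a c + ddG d a c b) / 2
       - Q c a d b + Q d a c b"
      unfolding s1 hD s2 by (simp add: field_simps)
    finally show ?thesis .
  qed
  show ?thesis
    unfolding Let_def main
    using Qsym[of c a d b] Qsym[of c b d a]
      symdd1[of c d a b] symdd1[of c d b a] symdd2[of c b a d] symdd2[of c a d b]
      symdd2[of d b a c] symdd2[of d a c b]
    by (simp add: field_simps)
qed

lemma smooth_pd: "smooth_on U f \<Longrightarrow> smooth_on U (pd b f)"
  unfolding smooth_on_def
proof (intro allI ballI)
  fix ds x assume "\<forall>ds. \<forall>x\<in>U. foldr pd ds f differentiable (at x)" "x \<in> U"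
  then have "foldr pd (ds @ [b]) f differentiable (at x)" by blast
  then show "foldr pd ds (pd b f) differentiable (at x)" by simp
qed

lemma smooth_diff: "smooth_on U f \<Longrightarrow> y \<in> U \<Longrightarrow> f differentiable (at y)"
  unfolding smooth_on_def by (metis foldr_Nil id_apply)

lemma smooth_schwarz:
  assumes "smooth_on U f" "open U" "y \<in> U"
  shows "pd c (pd d f) y = pd d (pd c f) y"
proof (rule schwarz[OF assms(2,3)])
  show "\<And>z. z \<in> U \<Longrightarrow> f differentiable (at z)" using smooth_diff assms(1) by blast
  show "\<And>z. z \<in> U \<Longrightarrow> pd d f differentiable (at z)" using smooth_diff smooth_pd assms(1) by blast
  show "\<And>z. z \<in> U \<Longrightarrow> pd c f differentiable (at z)" using smooth_diff smooth_pd assms(1) by blast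
  show "continuous (at y) (pd c (pd d f))"
    using smooth_diff[OF smooth_pd[OF smooth_pd[OF assms(1)]] assms(3)] differentiable_imp_continuous_within by blast
  show "continuous (at y) (pd d (pd c f))"
    using smooth_diff[OF smooth_pd[OF smooth_pd[OF assms(1)]] assms(3)] differentiable_imp_continuous_within by blast
qed

lemma delta_mult: "(\<Sum>f\<in>UNIV. (if a = f then 1 else 0) * Q f) = (Q a :: real)"
  "(\<Sum>f\<in>UNIV. Q f * (if a = f then 1 else 0)) = (Q a :: real)"
  "(\<Sum>f\<in>UNIV. (if f = a then 1 else 0) * Q f) = (Q a :: real)"
  "(\<Sum>f\<in>UNIV. Q f * (if f = a then 1 else 0)) = (Q a :: real)"
  for Q :: "'n::finite \<Rightarrow> real"
  by (simp_all add: if_distrib[of "\<lambda>t. t * _"] if_distrib[of "\<lambda>t. _ * t"] sum.delta sum.delta' cong: if_cong)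

locale geo =
  fixes g :: "real^'n::finite \<Rightarrow> real^'n^'n"
    and l nf :: "real^'n \<Rightarrow> real^'n"
    and mf :: "real^'n \<Rightarrow> nat \<Rightarrow> real^'n"
    and U :: "(real^'n) set"
  assumes dim: "CARD('n) > 4"
    and U_open: "open U"
    and metric: "lorentzian_metric U g"
    and l_smooth: "smooth_vf U l"
    and frame: "\<forall>x\<in>U. null_frame (g x) (l x) (nf x) (mf x)"
    and geod: "geodetic g U l"
begin

abbreviation Gf where "Gf a b \<equiv> (\<lambda>y. g y $ a $ b)"
abbreviation lf where "lf a \<equiv> (\<lambda>y. l y $ a)"

lemma Gs: "smooth_on U (Gf a b)" using metric unfolding lorentzian_metric_def by blast
lemma ls: "smooth_on U (lf a)" using l_smooth unfolding smooth_vf_def by blast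

lemma Gd: "y \<in> U \<Longrightarrow> Gf a b differentiable (at y)" using smooth_diff Gs by blast
lemma dGd: "y \<in> U \<Longrightarrow> pd c (Gf a b) differentiable (at y)" using smooth_diff smooth_pd Gs by blast
lemma ddGd: "y \<in> U \<Longrightarrow> pd c (pd d (Gf a b)) differentiable (at y)" using smooth_diff smooth_pd Gs by blast
lemma ld: "y \<in> U \<Longrightarrow> lf a differentiable (at y)" using smooth_diff ls by blast
lemma dld: "y \<in> U \<Longrightarrow> pd c (lf a) differentiable (at y)" using smooth_diff smooth_pd ls by blast

lemma symg: "y \<in> U \<Longrightarrow> g y $ a $ b = g y $ b $ a"
  using metric lorentzian_det(3) unfolding lorentzian_metric_def by blast
lemma detg: "y \<in> U \<Longrightarrow> det (g y) \<noteq> 0"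
  using metric lorentzian_det(1) unfolding lorentzian_metric_def by blast
lemma invg: "y \<in> U \<Longrightarrow> invertible (g y)"
  using metric lorentzian_det(2) unfolding lorentzian_metric_def by blast

lemma ginv_r: "y \<in> U \<Longrightarrow> (\<Sum>k\<in>UNIV. g y$i$k * ginv g y $k$j) = (if i = j then 1 else 0)"
  using inv_entries(1)[OF invg] unfolding ginv_def by blast
lemma ginv_l: "y \<in> U \<Longrightarrow> (\<Sum>k\<in>UNIV. ginv g y $i$k * g y $k$j) = (if i = j then 1 else 0)"
  using inv_entries(2)[OF invg] unfolding ginv_def by blast

lemma ginv_d: "y \<in> U \<Longrightarrow> (\<lambda>z. ginv g z $ i $ j) differentiable (at y)"
  unfolding ginv_def
  by (rule inv_differentiable[OF _ detg U_open]) (auto intro: Gd dest: detg)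

lemma dg_sym: "y \<in> U \<Longrightarrow> pd c (Gf a b) y = pd c (Gf b a) y"
  by (rule pd_local[OF U_open]) (auto simp: symg)

lemma ddg_sym: "y \<in> U \<Longrightarrow> pd c (pd d (Gf a b)) y = pd c (pd d (Gf b a)) y"
  by (rule pd_local[OF U_open], assumption, rule dg_sym)

lemma ddg_schwarz: "y \<in> U \<Longrightarrow> pd c (pd d (Gf a b)) y = pd d (pd c (Gf a b)) y"
  using smooth_schwarz[OF Gs U_open] by blast

lemma ddl_schwarz: "y \<in> U \<Longrightarrow> pd c (pd d (lf a)) y = pd d (pd c (lf a)) y"
  using smooth_schwarz[OF ls U_open] by blast

lemma chr_fun: "chr g c a b = (\<lambda>x. (1/2) * (\<Sum>d\<in>UNIV. ginv g x $ c $ d *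
      (pd a (Gf d b) x + pd b (Gf d a) x - pd d (Gf a b) x)))"
  by (rule ext) (simp add: chr_def)

lemma chr_d: assumes y: "y \<in> U" shows "chr g c a b differentiable (at y)"
  unfolding chr_fun
  by (auto intro!: differentiable_divide differentiable_mult differentiable_sum differentiable_add differentiable_diff ginv_d dGd y)

lemma chr_sym: "y \<in> U \<Longrightarrow> chr g c a b y = chr g c b a y"
  unfolding chr_def using dg_sym by (simp add: algebra_simps)

lemma chr_fun_sym: "y \<in> U \<Longrightarrow> pd e (chr g c a b) y = pd e (chr g c b a) y"
  by (rule pd_local[OF U_open], assumption, rule chr_sym)

lemma chr_low: "y \<in> U \<Longrightarrow> (\<Sum>e\<in>UNIV. g y$a$e * chr g e d b y) =
   (pd d (Gf a b) y + pd b (Gf a d) y - pd a (Gf d b) y) / 2"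
proof -
  assume y: "y \<in> U"
  have "(\<Sum>e\<in>UNIV. g y$a$e * chr g e d b y) =
     (1/2) * (\<Sum>f\<in>UNIV. (\<Sum>e\<in>UNIV. g y$a$e * ginv g y $ e $ f) *
        (pd d (Gf f b) y + pd b (Gf f d) y - pd f (Gf d b) y))"
  proof -
    have "(\<Sum>e\<in>UNIV. g y$a$e * chr g e d b y) = (1/2) * (\<Sum>e\<in>UNIV. \<Sum>f\<in>UNIV. g y$a$e * ginv g y $ e $ f *
        (pd d (Gf f b) y + pd b (Gf f d) y - pd f (Gf d b) y))"
      unfolding chr_def by (simp add: sum_distrib_left mult.assoc)
    also have "\<dots> = (1/2) * (\<Sum>f\<in>UNIV. \<Sum>e\<in>UNIV. g y$a$e * ginv g y $ e $ f *
        (pd d (Gf f b) y + pd b (Gf f d) y - pd f (Gf d b) y))"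
      by (subst sum.swap) simp
    also have "\<dots> = (1/2) * (\<Sum>f\<in>UNIV. (\<Sum>e\<in>UNIV. g y$a$e * ginv g y $ e $ f) *
        (pd d (Gf f b) y + pd b (Gf f d) y - pd f (Gf d b) y))"
      by (simp add: sum_distrib_right)
    finally show ?thesis .
  qed
  also have "\<dots> = (1/2) * (\<Sum>f\<in>UNIV. (if a = f then 1 else 0) *
        (pd d (Gf f b) y + pd b (Gf f d) y - pd f (Gf d b) y))"
    using ginv_r[OF y] by simp
  also have "\<dots> = (pd d (Gf a b) y + pd b (Gf a d) y - pd a (Gf d b) y) / 2"
    by (simp add: delta_mult)
  finally show ?thesis .
qed

end

lemma pd_divc:
  fixes f :: "real^'n::finite \<Rightarrow> real"
  shows "f differentiable (at x) \<Longrightarrow> pd b (\<lambda>y. f y / k) x = pd b f x / k"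
  using pd_cmult[of f x b "1/k"] by simp

context geo begin

lemma hD: assumes x: "x \<in> U"
  shows "(\<Sum>e\<in>UNIV. g x$a$e * pd c (chr g e d b) x) =
     (pd c (pd d (Gf a b)) x + pd c (pd b (Gf a d)) x - pd c (pd a (Gf d b)) x) / 2
     - (\<Sum>e\<in>UNIV. pd c (Gf a e) x * chr g e d b x)"
proof -
  have "pd c (\<lambda>y. \<Sum>e\<in>UNIV. g y$a$e * chr g e d b y) x =
        pd c (\<lambda>y. (pd d (Gf a b) y + pd b (Gf a d) y - pd a (Gf d b) y) / 2) x"
    by (rule pd_local[OF U_open x]) (rule chr_low)
  moreover have "pd c (\<lambda>y. \<Sum>e\<in>UNIV. g y$a$e * chr g e d b y) x =
       (\<Sum>e\<in>UNIV. pd c (Gf a e) x * chr g e d b x + g x$a$e * pd c (chr g e d b) x)"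
    by (subst pd_sum) (auto intro!: differentiable_mult Gd chr_d x simp: pd_mult[OF Gd[OF x] chr_d[OF x]])
  moreover have "pd c (\<lambda>y. (pd d (Gf a b) y + pd b (Gf a d) y - pd a (Gf d b) y) / 2) x =
     (pd c (pd d (Gf a b)) x + pd c (pd b (Gf a d)) x - pd c (pd a (Gf d b)) x) / 2"
    by (simp add: pd_divc pd_add pd_diff dGd x differentiable_add differentiable_diff)
  ultimately show ?thesis by (simp add: sum.distrib algebra_simps)
qed

lemma riem_antisym: assumes x: "x \<in> U"
  shows "riem g a b c d x = - riem g b a c d x"
proof -
  have "let R = (\<lambda>e b c d. pd c (chr g e d b) x - pd d (chr g e c b) x +
              (\<Sum>h\<in>UNIV. chr g e c h x * chr g h d b x - chr g e d h x * chr g h c b x))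
         in (\<Sum>e\<in>UNIV. g x$a$e * R e b c d) = - (\<Sum>e\<in>UNIV. g x$b$e * R e a c d)"
  proof (rule antisym_alg[where dG = "\<lambda>c a b. pd c (Gf a b) x" and ddG = "\<lambda>c d a b. pd c (pd d (Gf a b)) x"])
    show "\<And>a b. g x$a$b = g x$b$a" using symg[OF x] .
    show "\<And>c a b. pd c (Gf a b) x = pd c (Gf b a) x" using dg_sym[OF x] .
    show "\<And>c d a b. pd c (pd d (Gf a b)) x = pd d (pd c (Gf a b)) x" using ddg_schwarz[OF x] .
    show "\<And>c d a b. pd c (pd d (Gf a b)) x = pd c (pd d (Gf b a)) x" using ddg_sym[OF x] .
    show "\<And>a d b. (\<Sum>e\<in>UNIV. g x$a$e * chr g e d b x) = (pd d (Gf a b) x + pd b (Gf a d) x - pd a (Gf d b) x) / 2"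
      using chr_low[OF x] .
    show "\<And>a c d b. (\<Sum>e\<in>UNIV. g x$a$e * pd c (chr g e d b) x) =
       (pd c (pd d (Gf a b)) x + pd c (pd b (Gf a d)) x - pd c (pd a (Gf d b)) x) / 2
       - (\<Sum>e\<in>UNIV. pd c (Gf a e) x * chr g e d b x)"
      using hD[OF x] .
  qed
  then show ?thesis unfolding riem_def riem_up_def Let_def .
qed

lemma riem_up_cd: "riem_up g a b c d x = - riem_up g a b d c x"
  unfolding riem_up_def by (simp add: sum_subtractf algebra_simps)

lemma riem_cd: "riem g a b c d x = - riem g a b d c x"
  unfolding riem_def by (subst riem_up_cd) (simp add: sum_negf)

lemma lower_fun: "lower g l b = (\<lambda>y. \<Sum>a\<in>UNIV. g y$b$a * l y$a)"
  by (rule ext) (simp add: lower_def)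

lemma lower_d: "y \<in> U \<Longrightarrow> lower g l b differentiable (at y)"
  unfolding lower_fun by (auto intro!: differentiable_sum differentiable_mult Gd ld)

lemma dlower: "y \<in> U \<Longrightarrow> pd d (lower g l b) y =
   (\<Sum>a\<in>UNIV. pd d (Gf b a) y * l y$a + g y$b$a * pd d (lf a) y)"
  unfolding lower_fun by (subst pd_sum) (auto intro!: differentiable_mult Gd ld simp: pd_mult Gd ld)

lemma dlower_d: assumes y: "y \<in> U" shows "pd d (lower g l b) differentiable (at y)"
proof (rule diff_local[OF U_open y])
  show "\<And>z. z \<in> U \<Longrightarrow> (\<Sum>a\<in>UNIV. pd d (Gf b a) z * l z$a + g z$b$a * pd d (lf a) z) = pd d (lower g l b) z"
    using dlower by simp
  show "(\<lambda>z. \<Sum>a\<in>UNIV. pd d (Gf b a) z * l z$a + g z$b$a * pd d (lf a) z) differentiable (at y)"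
    by (auto intro!: differentiable_sum differentiable_mult differentiable_add Gd ld dGd dld y)
qed

lemma ddlower: assumes x: "x \<in> U" shows "pd c (pd d (lower g l b)) x =
   (\<Sum>a\<in>UNIV. pd c (pd d (Gf b a)) x * l x$a + pd d (Gf b a) x * pd c (lf a) x
            + (pd c (Gf b a) x * pd d (lf a) x + g x$b$a * pd c (pd d (lf a)) x))"
proof -
  have "pd c (pd d (lower g l b)) x = pd c (\<lambda>z. \<Sum>a\<in>UNIV. pd d (Gf b a) z * l z$a + g z$b$a * pd d (lf a) z) x"
    by (rule pd_local[OF U_open x]) (rule dlower)
  also have "\<dots> = (\<Sum>a\<in>UNIV. pd c (\<lambda>z. pd d (Gf b a) z * l z$a + g z$b$a * pd d (lf a) z) x)"
    by (rule pd_sum) (auto intro!: differentiable_mult differentiable_add Gd ld dGd dld x)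
  also have "\<dots> = (\<Sum>a\<in>UNIV. pd c (pd d (Gf b a)) x * l x$a + pd d (Gf b a) x * pd c (lf a) x
            + (pd c (Gf b a) x * pd d (lf a) x + g x$b$a * pd c (pd d (lf a)) x))"
    by (rule sum.cong[OF refl])
       (simp add: pd_add pd_mult differentiable_mult Gd ld dGd dld x)
  finally show ?thesis .
qed

lemma ddlower_sym: assumes x: "x \<in> U"
  shows "pd c (pd d (lower g l b)) x = pd d (pd c (lower g l b)) x"
  unfolding ddlower[OF x] using ddg_schwarz[OF x] ddl_schwarz[OF x]
  by (simp add: algebra_simps)

lemma cov_fun: "cov_low g l b d = (\<lambda>y. pd d (lower g l b) y - (\<Sum>c\<in>UNIV. chr g c b d y * lower g l c y))"
  by (rule ext) (simp add: cov_low_def)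

lemma cov_d: "y \<in> U \<Longrightarrow> cov_low g l b d differentiable (at y)"
  unfolding cov_fun by (auto intro!: differentiable_diff differentiable_sum differentiable_mult dlower_d chr_d lower_d)

lemma dcov: assumes x: "x \<in> U" shows "pd c (cov_low g l b d) x = pd c (pd d (lower g l b)) x
   - (\<Sum>e\<in>UNIV. pd c (chr g e b d) x * lower g l e x + chr g e b d x * pd c (lower g l e) x)"
  unfolding cov_fun
  apply (subst pd_diff)
    apply (auto intro!: differentiable_sum differentiable_mult dlower_d chr_d lower_d x)[2]
  apply (subst pd_sum)
   apply (auto intro!: differentiable_mult chr_d lower_d x)[1]
  apply (simp add: pd_mult chr_d lower_d x)
  done

definition Tt where "Tt x b d c = pd c (cov_low g l b d) x
   - (\<Sum>e\<in>UNIV. chr g e c b x * cov_low g l e d x) - (\<Sum>e\<in>UNIV. chr g e c d x * cov_low g l b e x)"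

lemma ricci_id: assumes x: "x \<in> U"
  shows "Tt x b d c - Tt x b c d = - (\<Sum>f\<in>UNIV. lower g l f x * riem_up g f b c d x)"
proof -
  have "let L = (\<lambda>b d. pd d (lower g l b) x - (\<Sum>e\<in>UNIV. chr g e b d x * lower g l e x));
             DL = (\<lambda>c b d. pd c (pd d (lower g l b)) x - (\<Sum>e\<in>UNIV. pd c (chr g e b d) x * lower g l e x + chr g e b d x * pd c (lower g l e) x));
             T = (\<lambda>b d c. DL c b d - (\<Sum>e\<in>UNIV. chr g e c b x * L e d) - (\<Sum>e\<in>UNIV. chr g e c d x * L b e))
         in T b d c - T b c d = - (\<Sum>f\<in>UNIV. lower g l f x * (pd c (chr g f d b) x - pd d (chr g f c b) x +
                 (\<Sum>e\<in>UNIV. chr g f c e x * chr g e d b x - chr g f d e x * chr g e c b x)))"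
    by (rule ricci_alg[where \<Gamma> = "\<lambda>e a b. chr g e a b x" and D\<Gamma> = "\<lambda>c e a b. pd c (chr g e a b) x"
          and Dl = "\<lambda>c e. pd c (lower g l e) x" and DDl = "\<lambda>c d b. pd c (pd d (lower g l b)) x"])
       (auto intro: chr_sym chr_fun_sym ddlower_sym x)
  then show ?thesis
    unfolding Let_def Tt_def dcov[OF x] riem_up_def
    by (simp add: cov_low_def)
qed

lemma l_riem: assumes x: "x \<in> U"
  shows "(\<Sum>a\<in>UNIV. l x$a * riem g a b c d x) = (\<Sum>f\<in>UNIV. lower g l f x * riem_up g f b c d x)"
proof -
  have "(\<Sum>a\<in>UNIV. l x$a * riem g a b c d x) = (\<Sum>a\<in>UNIV. \<Sum>f\<in>UNIV. l x$a * g x$a$f * riem_up g f b c d x)"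
    unfolding riem_def by (simp add: sum_distrib_left mult.assoc)
  also have "\<dots> = (\<Sum>f\<in>UNIV. \<Sum>a\<in>UNIV. l x$a * g x$a$f * riem_up g f b c d x)" by (rule sum.swap)
  also have "\<dots> = (\<Sum>f\<in>UNIV. lower g l f x * riem_up g f b c d x)"
    unfolding lower_def by (rule sum.cong[OF refl]) (simp add: sum_distrib_left sum_distrib_right symg[OF x] mult_ac)
  finally show ?thesis .
qed

end

lemma gform_add1: "gform G (u + w) v = gform G u v + gform G w v"
  unfolding gform_def by (simp add: algebra_simps sum.distrib)
lemma gform_scale1: "gform G (r *\<^sub>R u) v = r * gform G u v"
  unfolding gform_def by (simp add: sum_distrib_left mult_ac)
lemma gform_diff1: "gform G (u - w) v = gform G u v - gform G w v"
  unfolding gform_def by (simp add: algebra_simps sum_subtractf)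
lemma gform_diff2: "gform G u (v - w) = gform G u v - gform G u w"
  unfolding gform_def by (simp add: algebra_simps sum_subtractf)
lemma gform_zero1: "gform G 0 v = 0"
  unfolding gform_def by simp
lemma gform_sum1: "gform G (\<Sum>k\<in>K. f k) v = (\<Sum>k\<in>K. gform G (f k) v)"
  by (induction K rule: infinite_finite_induct) (auto simp: gform_add1 gform_zero1)
lemma gform_axis: "gform G (axis a 1) (axis b 1) = G$a$b"
  unfolding gform_def axis_def
  by (simp add: if_distrib[of "\<lambda>t. _ * t"] if_distrib[of "\<lambda>t. t * _"] sum.delta sum.delta' cong: if_cong)
lemma gform_mdiff: "gform (A - B) u v = gform A u v - gform B u v"
  unfolding gform_def by (simp add: algebra_simps sum_subtractf)
lemma gform_mscale: "gform (c *\<^sub>R A) u v = c * gform A u v"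
  unfolding gform_def by (simp add: sum_distrib_left mult_ac)

lemma ginv_frame_gen:
  fixes G Gi :: "real^'n::finite^'n"
  assumes sym: "\<And>a b. G$a$b = G$b$a" and N: "CARD('n) \<ge> 2" and fr: "null_frame G lv nv m"
    and inv: "\<And>i j. (\<Sum>k\<in>UNIV. G$i$k * Gi$k$j) = (if i = j then 1 else 0)"
  shows "Gi$a$b = lv$a * nv$b + nv$a * lv$b + (\<Sum>k\<in>frame_idx TYPE('n). m k$a * m k$b)"
proof -
  define v where "v = (\<chi> c. Gi$c$b)"
  have gv: "gform G u v = u$b" for u
  proof -
    have "gform G u v = (\<Sum>a\<in>UNIV. u$a * (\<Sum>c\<in>UNIV. G$a$c * Gi$c$b))"
      unfolding gform_def v_def by (simp add: sum_distrib_left mult_ac)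
    also have "\<dots> = u$b" using inv by (simp add: delta_mult)
    finally show ?thesis .
  qed
  have "v = gform G nv v *\<^sub>R lv + gform G lv v *\<^sub>R nv + (\<Sum>k\<in>frame_idx TYPE('n). gform G (m k) v *\<^sub>R m k)"
    by (rule frame_complete[OF sym N fr])
  then have "v$a = (gform G nv v *\<^sub>R lv + gform G lv v *\<^sub>R nv + (\<Sum>k\<in>frame_idx TYPE('n). gform G (m k) v *\<^sub>R m k))$a"
    by simp
  then have "v$a = lv$a * nv$b + nv$a * lv$b + (\<Sum>k\<in>frame_idx TYPE('n). m k$a * m k$b)"
    by (simp add: gv sum_component mult_ac)
  then show ?thesis by (simp add: v_def)
qed

lemma trace_frame:
  fixes Gi M :: "real^'n::finite^'n"
  assumes "\<And>a b. Gi$a$b = lv$a * nv$b + nv$a * lv$b + (\<Sum>k\<in>K. m k$a * m k$b)"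
  shows "(\<Sum>a\<in>UNIV. \<Sum>b\<in>UNIV. Gi$a$b * M$a$b) = gform M lv nv + gform M nv lv + (\<Sum>k\<in>K. gform M (m k) (m k))"
proof -
  have "(\<Sum>a\<in>UNIV. \<Sum>b\<in>UNIV. Gi$a$b * M$a$b) =
     (\<Sum>a\<in>UNIV. \<Sum>b\<in>UNIV. M$a$b * lv$a * nv$b + M$a$b * nv$a * lv$b + (\<Sum>k\<in>K. M$a$b * m k$a * m k$b))"
    unfolding assms by (simp add: algebra_simps sum_distrib_left)
  also have "\<dots> = gform M lv nv + gform M nv lv + (\<Sum>a\<in>UNIV. \<Sum>b\<in>UNIV. \<Sum>k\<in>K. M$a$b * m k$a * m k$b)"
    unfolding gform_def by (simp add: sum.distrib)
  also have "(\<Sum>a\<in>UNIV. \<Sum>b\<in>UNIV. \<Sum>k\<in>K. M$a$b * m k$a * m k$b) = (\<Sum>k\<in>K. gform M (m k) (m k))"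
    unfolding gform_def by (simp add: sum.swap[of _ K])
  finally show ?thesis .
qed

context geo begin

lemma N2: "CARD('n) \<ge> 2" using dim by simp

lemma ginv_frame: "y \<in> U \<Longrightarrow> ginv g y $a$b = l y$a * nf y$b + nf y$a * l y$b + (\<Sum>k\<in>frame_idx TYPE('n). mf y k$a * mf y k$b)"
  by (rule ginv_frame_gen[OF symg N2]) (auto simp: frame ginv_r)

definition K where "K h d y = pd d (lf h) y + (\<Sum>e\<in>UNIV. chr g h d e y * l y$e)"

lemma compatL: assumes y: "y \<in> U"
  shows "cov_low g l b d y = (\<Sum>h\<in>UNIV. g y$b$h * K h d y)"
proof -
  have A: "(\<Sum>c\<in>UNIV. chr g c b d y * lower g l c y) =
      (\<Sum>h\<in>UNIV. l y$h * ((pd b (Gf h d) y + pd d (Gf h b) y - pd h (Gf b d) y) / 2))"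
  proof -
    have "(\<Sum>c\<in>UNIV. chr g c b d y * lower g l c y) = (\<Sum>c\<in>UNIV. \<Sum>h\<in>UNIV. chr g c b d y * g y$c$h * l y$h)"
      unfolding lower_def by (simp add: sum_distrib_left mult.assoc)
    also have "\<dots> = (\<Sum>h\<in>UNIV. \<Sum>c\<in>UNIV. chr g c b d y * g y$c$h * l y$h)" by (rule sum.swap)
    also have "\<dots> = (\<Sum>h\<in>UNIV. l y$h * (\<Sum>c\<in>UNIV. g y$h$c * chr g c b d y))"
      by (rule sum.cong[OF refl]) (simp add: sum_distrib_left symg[OF y] mult_ac)
    also have "\<dots> = (\<Sum>h\<in>UNIV. l y$h * ((pd b (Gf h d) y + pd d (Gf h b) y - pd h (Gf b d) y) / 2))"
      by (simp only: chr_low[OF y])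
    finally show ?thesis .
  qed
  have B: "(\<Sum>h\<in>UNIV. g y$b$h * K h d y) = (\<Sum>h\<in>UNIV. g y$b$h * pd d (lf h) y) +
      (\<Sum>e\<in>UNIV. l y$e * ((pd d (Gf b e) y + pd e (Gf b d) y - pd b (Gf d e) y) / 2))"
  proof -
    have "(\<Sum>h\<in>UNIV. g y$b$h * K h d y) = (\<Sum>h\<in>UNIV. g y$b$h * pd d (lf h) y) +
       (\<Sum>h\<in>UNIV. \<Sum>e\<in>UNIV. g y$b$h * chr g h d e y * l y$e)"
      unfolding K_def by (simp add: algebra_simps sum.distrib sum_distrib_left)
    also have "(\<Sum>h\<in>UNIV. \<Sum>e\<in>UNIV. g y$b$h * chr g h d e y * l y$e) = (\<Sum>e\<in>UNIV. \<Sum>h\<in>UNIV. g y$b$h * chr g h d e y * l y$e)"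
      by (rule sum.swap)
    also have "\<dots> = (\<Sum>e\<in>UNIV. l y$e * (\<Sum>h\<in>UNIV. g y$b$h * chr g h d e y))"
      by (rule sum.cong[OF refl]) (simp add: sum_distrib_left mult_ac)
    also have "\<dots> = (\<Sum>e\<in>UNIV. l y$e * ((pd d (Gf b e) y + pd e (Gf b d) y - pd b (Gf d e) y) / 2))"
      by (simp only: chr_low[OF y])
    finally show ?thesis .
  qed
  have "cov_low g l b d y = (\<Sum>a\<in>UNIV. pd d (Gf b a) y * l y$a + g y$b$a * pd d (lf a) y)
       - (\<Sum>h\<in>UNIV. l y$h * ((pd b (Gf h d) y + pd d (Gf h b) y - pd h (Gf b d) y) / 2))"
    unfolding cov_low_def dlower[OF y] A ..
  also have "\<dots> = (\<Sum>h\<in>UNIV. g y$b$h * pd d (lf h) y) +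
      (\<Sum>e\<in>UNIV. l y$e * ((pd d (Gf b e) y + pd e (Gf b d) y - pd b (Gf d e) y) / 2))"
  proof -
    have "pd d (Gf b a) y * l y$a - l y$a * ((pd b (Gf a d) y + pd d (Gf a b) y - pd a (Gf b d) y) / 2)
       = l y$a * ((pd d (Gf b a) y + pd a (Gf b d) y - pd b (Gf d a) y) / 2)" for a
      using dg_sym[OF y, of b a d] dg_sym[OF y, of d a b] by (simp add: field_simps)
    note pa = this
    have "(\<Sum>a\<in>UNIV. pd d (Gf b a) y * l y$a + g y$b$a * pd d (lf a) y)
       - (\<Sum>h\<in>UNIV. l y$h * ((pd b (Gf h d) y + pd d (Gf h b) y - pd h (Gf b d) y) / 2))
       = (\<Sum>a\<in>UNIV. (pd d (Gf b a) y * l y$a + g y$b$a * pd d (lf a) y)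
             - l y$a * ((pd b (Gf a d) y + pd d (Gf a b) y - pd a (Gf b d) y) / 2))"
      by (simp add: sum_subtractf)
    also have "\<dots> = (\<Sum>a\<in>UNIV. g y$b$a * pd d (lf a) y
             + l y$a * ((pd d (Gf b a) y + pd a (Gf b d) y - pd b (Gf d a) y) / 2))"
    proof (rule sum.cong[OF refl])
      fix a show "(pd d (Gf b a) y * l y$a + g y$b$a * pd d (lf a) y)
             - l y$a * ((pd b (Gf a d) y + pd d (Gf a b) y - pd a (Gf b d) y) / 2) =
          g y$b$a * pd d (lf a) y + l y$a * ((pd d (Gf b a) y + pd a (Gf b d) y - pd b (Gf d a) y) / 2)"
        using pa[of a] by linarith
    qed
    also have "\<dots> = (\<Sum>h\<in>UNIV. g y$b$h * pd d (lf h) y) +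
      (\<Sum>e\<in>UNIV. l y$e * ((pd d (Gf b e) y + pd e (Gf b d) y - pd b (Gf d e) y) / 2))"
      by (simp add: sum.distrib)
    finally show ?thesis .
  qed
  finally show ?thesis using B by simp
qed

lemma gll: "y \<in> U \<Longrightarrow> (\<Sum>b\<in>UNIV. l y$b * lower g l b y) = 0"
proof -
  assume y: "y \<in> U"
  have "gform (g y) (l y) (l y) = 0" using frame y unfolding null_frame_def by blast
  then show ?thesis unfolding gform_def lower_def
    by (simp add: sum_distrib_left mult_ac)
qed

lemma nullL: assumes y: "y \<in> U"
  shows "(\<Sum>b\<in>UNIV. l y$b * cov_low g l b d y) = 0"
proof -
  have "pd d (\<lambda>z. \<Sum>b\<in>UNIV. l z$b * lower g l b z) y = pd d (\<lambda>z. 0) y"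
    by (rule pd_local[OF U_open y]) (rule gll)
  then have D0: "(\<Sum>b\<in>UNIV. pd d (lf b) y * lower g l b y + l y$b * pd d (lower g l b) y) = 0"
    by (subst (asm) pd_sum) (auto intro!: differentiable_mult ld lower_d y simp: pd_mult ld lower_d y)
  have E1: "(\<Sum>b\<in>UNIV. l y$b * cov_low g l b d y) = (\<Sum>b\<in>UNIV. l y$b * pd d (lower g l b) y)
     - (\<Sum>b\<in>UNIV. \<Sum>c\<in>UNIV. l y$b * chr g c b d y * lower g l c y)"
    unfolding cov_low_def by (simp add: algebra_simps sum_subtractf sum_distrib_left)
  have E2: "(\<Sum>b\<in>UNIV. l y$b * cov_low g l b d y) = (\<Sum>h\<in>UNIV. lower g l h y * pd d (lf h) y)
     + (\<Sum>h\<in>UNIV. \<Sum>e\<in>UNIV. lower g l h y * chr g h d e y * l y$e)"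
  proof -
    have "(\<Sum>b\<in>UNIV. l y$b * cov_low g l b d y) = (\<Sum>b\<in>UNIV. \<Sum>h\<in>UNIV. l y$b * g y$b$h * K h d y)"
      unfolding compatL[OF y] by (simp add: sum_distrib_left mult.assoc)
    also have "\<dots> = (\<Sum>h\<in>UNIV. \<Sum>b\<in>UNIV. l y$b * g y$b$h * K h d y)" by (rule sum.swap)
    also have "\<dots> = (\<Sum>h\<in>UNIV. lower g l h y * K h d y)"
      unfolding lower_def by (rule sum.cong[OF refl]) (simp add: sum_distrib_left sum_distrib_right symg[OF y] mult_ac)
    also have "\<dots> = (\<Sum>h\<in>UNIV. lower g l h y * pd d (lf h) y)
     + (\<Sum>h\<in>UNIV. \<Sum>e\<in>UNIV. lower g l h y * chr g h d e y * l y$e)"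
      unfolding K_def by (simp add: algebra_simps sum.distrib sum_distrib_left)
    finally show ?thesis .
  qed
  have sw: "(\<Sum>b\<in>UNIV. \<Sum>c\<in>UNIV. l y$b * chr g c b d y * lower g l c y)
      = (\<Sum>h\<in>UNIV. \<Sum>e\<in>UNIV. lower g l h y * chr g h d e y * l y$e)"
    by (subst sum.swap) (rule sum.cong[OF refl], rule sum.cong[OF refl], subst chr_sym[OF y], simp add: mult_ac)
  have "2 * (\<Sum>b\<in>UNIV. l y$b * cov_low g l b d y) =
    (\<Sum>b\<in>UNIV. pd d (lf b) y * lower g l b y + l y$b * pd d (lower g l b) y)"
    using E1 E2 sw by (simp add: sum.distrib mult_ac)
  then show ?thesis using D0 by simp
qed

end

locale geo_pt = geo g l nf mf U
  for g :: "real^'n::finite \<Rightarrow> real^'n^'n" and l nf mf U +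
  fixes x0 and a0
  assumes x0: "x0 \<in> U" and a0: "lower g l a0 x0 \<noteq> 0"
    and shear0: "\<forall>x\<in>U. \<forall>i\<in>frame_idx TYPE('n). \<forall>j\<in>frame_idx TYPE('n). shear g l (mf x) x i j = 0"
    and twist0: "\<forall>x\<in>U. \<forall>i\<in>frame_idx TYPE('n). \<forall>j\<in>frame_idx TYPE('n). twist g l (mf x) x i j = 0"
begin

definition "V = U \<inter> (lower g l a0) -` (-{0})"
definition "W a y = (\<Sum>b\<in>UNIV. l y$b * cov_low g l a b y)"
definition "fV y = W a0 y / lower g l a0 y"
definition "Lm y = (\<chi> a b. cov_low g l a b y)"
definition "th y = ((\<Sum>a\<in>UNIV. \<Sum>b\<in>UNIV. ginv g y$a$b * cov_low g l a b y) - fV y) / (real CARD('n) - 2)"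
definition "S a b y = cov_low g l a b y - th y * g y$a$b"
definition "X b y = S a0 b y / lower g l a0 y"
definition "Y a y = S a a0 y / lower g l a0 y - lower g l a y * S a0 a0 y / (lower g l a0 y)^2"

lemma V_sub: "V \<subseteq> U" unfolding V_def by auto
lemma x0V: "x0 \<in> V" unfolding V_def using x0 a0 by auto
lemma V_open: "open V"
proof -
  have "continuous_on U (lower g l a0)"
    by (rule continuous_at_imp_continuous_on)
       (auto intro: differentiable_imp_continuous_within lower_d)
  then show ?thesis unfolding V_def by (rule continuous_open_preimage[OF _ U_open]) auto
qed
lemma V_ne: "y \<in> V \<Longrightarrow> lower g l a0 y \<noteq> 0" unfolding V_def by auto
lemma VU: "y \<in> V \<Longrightarrow> y \<in> U" using V_sub by auto

lemma W_eq: assumes y: "y \<in> V" shows "W a y = fV y * lower g l a y"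
proof -
  obtain f where f: "\<And>a. (\<Sum>b\<in>UNIV. l y $ b * cov_low g l a b y) = f * lower g l a y"
    using geod VU[OF y] unfolding geodetic_def by blast
  have "fV y = f" unfolding fV_def W_def f using V_ne[OF y] by simp
  then show ?thesis unfolding W_def f by simp
qed

lemma gform_l: "y \<in> U \<Longrightarrow> gform (g y) (l y) u = (\<Sum>b\<in>UNIV. lower g l b y * u$b)"
  unfolding gform_def lower_def by (subst sum.swap) (simp add: sum_distrib_right sum_distrib_left symg mult_ac)

lemma fr: "y \<in> U \<Longrightarrow> null_frame (g y) (l y) (nf y) (mf y)" using frame by blast

lemma fr_facts: assumes y: "y \<in> U"
  shows "gform (g y) (l y) (l y) = 0" "gform (g y) (nf y) (nf y) = 0" "gform (g y) (l y) (nf y) = 1"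
     "\<And>i. i\<in>frame_idx TYPE('n) \<Longrightarrow> gform (g y) (l y) (mf y i) = 0"
     "\<And>i. i\<in>frame_idx TYPE('n) \<Longrightarrow> gform (g y) (nf y) (mf y i) = 0"
     "\<And>i j. i\<in>frame_idx TYPE('n) \<Longrightarrow> j\<in>frame_idx TYPE('n) \<Longrightarrow> gform (g y) (mf y i) (mf y j) = (if i = j then 1 else 0)"
  using fr[OF y] unfolding null_frame_def by auto

lemma gsym: "y \<in> U \<Longrightarrow> gform (g y) u v = gform (g y) v u"
  by (rule gform_sym) (rule symg)

lemma Lm_l1: "y \<in> U \<Longrightarrow> gform (Lm y) (l y) w = 0"
proof -
  assume y: "y \<in> U"
  have "gform (Lm y) (l y) w = (\<Sum>b\<in>UNIV. w$b * (\<Sum>a\<in>UNIV. l y$a * cov_low g l a b y))"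
    unfolding gform_def Lm_def by (subst sum.swap) (simp add: sum_distrib_left mult_ac)
  then show ?thesis using nullL[OF y] by simp
qed

lemma Lm_l2: "y \<in> V \<Longrightarrow> gform (Lm y) u (l y) = fV y * (\<Sum>a\<in>UNIV. lower g l a y * u$a)"
proof -
  assume y: "y \<in> V"
  have "gform (Lm y) u (l y) = (\<Sum>a\<in>UNIV. u$a * W a y)"
    unfolding gform_def Lm_def W_def by (simp add: sum_distrib_left mult_ac)
  then show ?thesis using W_eq[OF y] by (simp add: sum_distrib_left mult_ac)
qed

lemma Lij_gform: "Lij g l m y i j = gform (Lm y) (m i) (m j)"
  unfolding Lij_def gform_def Lm_def by simp

lemma card_FI: "card (frame_idx TYPE('n)) = CARD('n) - 2" by (simp add: frame_idx_def)

lemma th_eq: assumes y: "y \<in> V" shows "expansion g l (mf y) y = th y"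
proof -
  have yU: "y \<in> U" using VU[OF y] .
  have tr: "(\<Sum>a\<in>UNIV. \<Sum>b\<in>UNIV. ginv g y$a$b * (Lm y)$a$b) =
     gform (Lm y) (l y) (nf y) + gform (Lm y) (nf y) (l y) + (\<Sum>k\<in>frame_idx TYPE('n). gform (Lm y) (mf y k) (mf y k))"
    by (rule trace_frame) (rule ginv_frame[OF yU])
  have "gform (Lm y) (nf y) (l y) = fV y"
    using Lm_l2[OF y] fr_facts(3)[OF yU] gform_l[OF yU, of "nf y"] by simp
  then have "(\<Sum>a\<in>UNIV. \<Sum>b\<in>UNIV. ginv g y$a$b * cov_low g l a b y) = fV y + (\<Sum>k\<in>frame_idx TYPE('n). Lij g l (mf y) y k k)"
    using tr Lm_l1[OF yU] by (simp add: Lm_def Lij_gform)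
  moreover have "real CARD('n) - 2 \<noteq> 0" using dim by simp
  ultimately show ?thesis unfolding th_def expansion_def by (simp add: field_simps)
qed

lemma Lij_th: assumes y: "y \<in> V" and i: "i \<in> frame_idx TYPE('n)" and j: "j \<in> frame_idx TYPE('n)"
  shows "Lij g l (mf y) y i j = (if i = j then th y else 0)"
proof -
  have "shear g l (mf y) y i j = 0" "twist g l (mf y) y i j = 0"
    using shear0 twist0 VU[OF y] i j by auto
  then show ?thesis unfolding shear_def twist_def th_eq[OF y] by (auto simp: field_simps split: if_splits)
qed

end

context geo_pt begin

lemma u_expand: assumes y: "y \<in> U" and u: "(\<Sum>c\<in>UNIV. lower g l c y * u$c) = 0"
  shows "u = gform (g y) (nf y) u *\<^sub>R l y + (\<Sum>k\<in>frame_idx TYPE('n). gform (g y) (mf y k) u *\<^sub>R mf y k)"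
proof -
  have "u = gform (g y) (nf y) u *\<^sub>R l y + gform (g y) (l y) u *\<^sub>R nf y + (\<Sum>k\<in>frame_idx TYPE('n). gform (g y) (mf y k) u *\<^sub>R mf y k)"
    by (rule frame_complete[OF symg[OF y] N2 fr[OF y]])
  moreover have "gform (g y) (l y) u = 0" using gform_l[OF y] u by simp
  ultimately show ?thesis by simp
qed

lemma lam_m: "y \<in> U \<Longrightarrow> k \<in> frame_idx TYPE('n) \<Longrightarrow> (\<Sum>c\<in>UNIV. lower g l c y * mf y k $c) = 0"
  using gform_l fr_facts(4) by metis

lemma lam_l: "y \<in> U \<Longrightarrow> (\<Sum>c\<in>UNIV. lower g l c y * l y $c) = 0"
  using gform_l fr_facts(1) by metis

definition "Sm y = Lm y - th y *\<^sub>R g y"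

lemma Sm_first_zero: assumes y: "y \<in> V" and v: "(\<Sum>c\<in>UNIV. lower g l c y * v$c) = 0"
  and w: "w = l y \<or> (\<exists>k\<in>frame_idx TYPE('n). w = mf y k)"
  shows "gform (Sm y) w v = 0"
proof -
  have yU: "y \<in> U" using VU[OF y] .
  show ?thesis
  proof (cases "w = l y")
    case True
    then show ?thesis unfolding Sm_def gform_mdiff gform_mscale
      using Lm_l1[OF yU] gform_l[OF yU] v by simp
  next
    case False
    then obtain k where k: "k \<in> frame_idx TYPE('n)" "w = mf y k" using w by blast
    have vexp: "v = gform (g y) (nf y) v *\<^sub>R l y + (\<Sum>j\<in>frame_idx TYPE('n). gform (g y) (mf y j) v *\<^sub>R mf y j)"
      by (rule u_expand[OF yU v])
    have z1: "gform (Sm y) (mf y k) (l y) = 0"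
      unfolding Sm_def gform_mdiff gform_mscale
      using Lm_l2[OF y] lam_m[OF yU k(1)] fr_facts(4)[OF yU k(1)] gsym[OF yU, of "mf y k" "l y"] by simp
    have z2: "gform (Sm y) (mf y k) (mf y j) = 0" if j: "j \<in> frame_idx TYPE('n)" for j
      unfolding Sm_def gform_mdiff gform_mscale
      using Lij_th[OF y k(1) j] fr_facts(6)[OF yU k(1) j] by (simp add: Lij_gform)
    have "gform (Sm y) w v = gform (Sm y) (mf y k) (gform (g y) (nf y) v *\<^sub>R l y + (\<Sum>j\<in>frame_idx TYPE('n). gform (g y) (mf y j) v *\<^sub>R mf y j))"
      using vexp k(2) by simp
    also have "\<dots> = 0"
      by (simp add: gform_add2 gform_scale2 gform_sum2 z1 z2)
    finally show ?thesis .
  qed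
qed

lemma Sm_zero: assumes y: "y \<in> V" and u: "(\<Sum>c\<in>UNIV. lower g l c y * u$c) = 0"
  and v: "(\<Sum>c\<in>UNIV. lower g l c y * v$c) = 0"
  shows "gform (Sm y) u v = 0"
proof -
  have yU: "y \<in> U" using VU[OF y] .
  have "gform (Sm y) u v = gform (Sm y) (gform (g y) (nf y) u *\<^sub>R l y + (\<Sum>k\<in>frame_idx TYPE('n). gform (g y) (mf y k) u *\<^sub>R mf y k)) v"
    using u_expand[OF yU u] by simp
  also have "\<dots> = 0"
  proof -
    have z0: "gform (Sm y) (l y) v = 0" using Sm_first_zero[OF y v] by blast
    have zk: "(\<Sum>k\<in>frame_idx TYPE('n). gform (g y) (mf y k) u * gform (Sm y) (mf y k) v) = 0"
    proof (rule sum.neutral, intro ballI)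
      fix k assume "k \<in> frame_idx TYPE('n)"
      then have "gform (Sm y) (mf y k) v = 0" using Sm_first_zero[OF y v] by blast
      then show "gform (g y) (mf y k) u * gform (Sm y) (mf y k) v = 0" by simp
    qed
    show ?thesis by (simp add: gform_add1 gform_scale1 gform_sum1 z0 zk)
  qed
  finally show ?thesis .
qed

lemma lam_axis: "(\<Sum>c\<in>UNIV. lam c * axis a (1::real) $c) = lam a"
  unfolding axis_def by (simp add: delta_mult)

lemma decomp: assumes y: "y \<in> V"
  shows "cov_low g l a b y = th y * g y$a$b + lower g l a y * X b y + Y a y * lower g l b y"
proof -
  define lm where "lm c = lower g l c y" for c
  have l0: "(lm a0) \<noteq> 0" using V_ne[OF y] by (simp add: lm_def)
  define u where "u = axis a 1 - (lm a / (lm a0)) *\<^sub>R axis a0 (1::real)"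
  define v where "v = axis b 1 - (lm b / (lm a0)) *\<^sub>R axis a0 (1::real)"
  have pu: "(\<Sum>c\<in>UNIV. lm c * u$c) = 0"
  proof -
    have "(\<Sum>c\<in>UNIV. lm c * u$c) = (\<Sum>c\<in>UNIV. lm c * axis a 1$c) - (lm a/(lm a0)) * (\<Sum>c\<in>UNIV. lm c * axis a0 1$c)"
      unfolding u_def by (simp add: algebra_simps sum_subtractf sum_distrib_left)
    also have "\<dots> = 0" using l0 by (simp add: lam_axis[of lm])
    finally show ?thesis .
  qed
  have pv: "(\<Sum>c\<in>UNIV. lm c * v$c) = 0"
  proof -
    have "(\<Sum>c\<in>UNIV. lm c * v$c) = (\<Sum>c\<in>UNIV. lm c * axis b 1$c) - (lm b/(lm a0)) * (\<Sum>c\<in>UNIV. lm c * axis a0 1$c)"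
      unfolding v_def by (simp add: algebra_simps sum_subtractf sum_distrib_left)
    also have "\<dots> = 0" using l0 by (simp add: lam_axis[of lm])
    finally show ?thesis .
  qed
  have Sme: "(Sm y)$p$q = S p q y" for p q unfolding Sm_def S_def Lm_def by simp
  have "gform (Sm y) u v = S a b y - (lm b/(lm a0)) * S a a0 y - (lm a/(lm a0)) * S a0 b y + (lm a/(lm a0)) * (lm b/(lm a0)) * S a0 a0 y"
    unfolding u_def v_def by (simp add: gform_diff1 gform_diff2 gform_scale1 gform_scale2 gform_axis Sme algebra_simps)
  then have "S a b y = (lm b/(lm a0)) * S a a0 y + (lm a/(lm a0)) * S a0 b y - (lm a/(lm a0)) * (lm b/(lm a0)) * S a0 a0 y"
    using Sm_zero[OF y pu[unfolded lm_def] pv[unfolded lm_def]] by simp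
  moreover have "lm a * X b y + Y a y * lm b = (lm b/(lm a0)) * S a a0 y + (lm a/(lm a0)) * S a0 b y - (lm a/(lm a0)) * (lm b/(lm a0)) * S a0 a0 y"
    unfolding X_def Y_def lm_def[symmetric] using l0 by (simp add: field_simps power2_eq_square)
  ultimately have "S a b y = lm a * X b y + Y a y * lm b" by simp
  then show ?thesis unfolding S_def by (simp add: lm_def)
qed

end

lemma contr_A:
  fixes T G :: "'n::finite \<Rightarrow> 'n \<Rightarrow> real"
  assumes "\<And>b d. T b d = D * G b d + P b * X d + lam b * F d + H b * lam d + Y b * Q d"
  shows "(\<Sum>b\<in>UNIV. \<Sum>d\<in>UNIV. T b d * u b * v d) = D * (\<Sum>b\<in>UNIV. \<Sum>d\<in>UNIV. G b d * u b * v d)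
     + (\<Sum>b\<in>UNIV. P b * u b) * (\<Sum>d\<in>UNIV. X d * v d) + (\<Sum>b\<in>UNIV. lam b * u b) * (\<Sum>d\<in>UNIV. F d * v d)
     + (\<Sum>b\<in>UNIV. H b * u b) * (\<Sum>d\<in>UNIV. lam d * v d) + (\<Sum>b\<in>UNIV. Y b * u b) * (\<Sum>d\<in>UNIV. Q d * v d)"
  unfolding sum_product by (simp add: assms sum.distrib sum_distrib_left algebra_simps)

context geo_pt begin

lemma W_d: "y \<in> U \<Longrightarrow> W a differentiable (at y)"
  unfolding W_def[abs_def] by (auto intro!: differentiable_sum differentiable_mult ld cov_d)

lemma fV_d: "y \<in> V \<Longrightarrow> fV differentiable (at y)"
  unfolding fV_def[abs_def] by (auto intro!: differentiable_divide W_d lower_d VU V_ne simp: V_ne)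

lemma th_d: assumes y: "y \<in> V" shows "th differentiable (at y)"
proof -
  have n2: "real CARD('n) - 2 \<noteq> 0" using dim by simp
  show ?thesis unfolding th_def[abs_def] using y n2
  by (auto intro!: differentiable_divide differentiable_diff differentiable_sum differentiable_mult
      ginv_d cov_d fV_d VU)
qed

lemma S_d: "y \<in> V \<Longrightarrow> S a b differentiable (at y)"
  unfolding S_def[abs_def] by (auto intro!: differentiable_diff differentiable_mult cov_d th_d Gd VU)

lemma X_d: "y \<in> V \<Longrightarrow> X b differentiable (at y)"
  unfolding X_def[abs_def] by (auto intro!: differentiable_divide S_d lower_d VU V_ne simp: V_ne)

lemma Y_d: "y \<in> V \<Longrightarrow> Y a differentiable (at y)"
  unfolding Y_def[abs_def] by (auto intro!: differentiable_divide differentiable_diff differentiable_mult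
     differentiable_power S_d lower_d VU V_ne simp: V_ne)

lemma compatG: assumes y: "y \<in> U"
  shows "pd c (Gf b d) y = (\<Sum>e\<in>UNIV. chr g e c b y * g y$e$d) + (\<Sum>e\<in>UNIV. chr g e c d y * g y$b$e)"
proof -
  have 1: "(\<Sum>e\<in>UNIV. chr g e c b y * g y$e$d) = (pd c (Gf d b) y + pd b (Gf d c) y - pd d (Gf c b) y) / 2"
    using chr_low[OF y, of d c b] by (simp add: symg[OF y, of _ d] mult.commute)
  have 2: "(\<Sum>e\<in>UNIV. chr g e c d y * g y$b$e) = (pd c (Gf b d) y + pd d (Gf b c) y - pd b (Gf c d) y) / 2"
    using chr_low[OF y, of b c d] by (simp add: mult.commute)
  show ?thesis unfolding 1 2
    using dg_sym[OF y, of c d b] dg_sym[OF y, of b d c] dg_sym[OF y, of d b c] by (simp add: field_simps)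
qed

lemma Tt_struct: fixes b d c
  defines "x \<equiv> x0"
  shows "Tt x b d c = pd c th x * g x$b$d + cov_low g l b c x * X d x
     + lower g l b x * (pd c (X d) x - (\<Sum>e\<in>UNIV. chr g e c d x * X e x))
     + (pd c (Y b) x - (\<Sum>e\<in>UNIV. chr g e c b x * Y e x)) * lower g l d x
     + Y b x * cov_low g l d c x"
proof -
  have xV: "x \<in> V" unfolding x_def by (rule x0V)
  have xU: "x \<in> U" using VU[OF xV] .
  have dc: "pd c (cov_low g l b d) x = pd c (\<lambda>y. th y * g y$b$d + lower g l b y * X d y + Y b y * lower g l d y) x"
    by (rule pd_local[OF V_open xV]) (rule decomp)
  also have "\<dots> = pd c th x * g x$b$d + th x * pd c (Gf b d) x + (pd c (lower g l b) x * X d x + lower g l b x * pd c (X d) x)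
      + (pd c (Y b) x * lower g l d x + Y b x * pd c (lower g l d) x)"
    by (simp add: pd_add pd_mult th_d Gd X_d Y_d lower_d xV xU differentiable_add differentiable_mult)
  finally have dc: "pd c (cov_low g l b d) x = pd c th x * g x$b$d + th x * pd c (Gf b d) x + (pd c (lower g l b) x * X d x + lower g l b x * pd c (X d) x)
      + (pd c (Y b) x * lower g l d x + Y b x * pd c (lower g l d) x)" .
  have s1: "(\<Sum>e\<in>UNIV. chr g e c b x * cov_low g l e d x) = th x * (\<Sum>e\<in>UNIV. chr g e c b x * g x$e$d)
      + (\<Sum>e\<in>UNIV. chr g e c b x * lower g l e x) * X d x + (\<Sum>e\<in>UNIV. chr g e c b x * Y e x) * lower g l d x"
    by (simp add: decomp[OF xV] algebra_simps sum.distrib sum_distrib_left sum_distrib_right)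
  have s2: "(\<Sum>e\<in>UNIV. chr g e c d x * cov_low g l b e x) = th x * (\<Sum>e\<in>UNIV. chr g e c d x * g x$b$e)
      + lower g l b x * (\<Sum>e\<in>UNIV. chr g e c d x * X e x) + Y b x * (\<Sum>e\<in>UNIV. chr g e c d x * lower g l e x)"
    by (simp add: decomp[OF xV] algebra_simps sum.distrib sum_distrib_left sum_distrib_right)
  have Lbc: "cov_low g l b c x = pd c (lower g l b) x - (\<Sum>e\<in>UNIV. chr g e c b x * lower g l e x)"
    unfolding cov_low_def using chr_sym[OF xU] by simp
  have Ldc: "cov_low g l d c x = pd c (lower g l d) x - (\<Sum>e\<in>UNIV. chr g e c d x * lower g l e x)"
    unfolding cov_low_def using chr_sym[OF xU] by simp
  show ?thesis
    unfolding Tt_def dc s1 s2 Lbc Ldc compatG[OF xU]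
    by (simp add: algebra_simps)
qed

end

context geo_pt begin

lemma x0U: "x0 \<in> U" using x0 .

lemma W_m: "y \<in> V \<Longrightarrow> k \<in> frame_idx TYPE('n) \<Longrightarrow> (\<Sum>b\<in>UNIV. W b y * mf y k $ b) = 0"
proof -
  assume y: "y \<in> V" and k: "k \<in> frame_idx TYPE('n)"
  have "(\<Sum>b\<in>UNIV. W b y * mf y k $ b) = fV y * (\<Sum>b\<in>UNIV. lower g l b y * mf y k $ b)"
    by (simp add: W_eq[OF y] sum_distrib_left mult_ac)
  then show ?thesis using lam_m[OF VU[OF y] k] by simp
qed

lemma TC1: assumes i: "i \<in> frame_idx TYPE('n)" and j: "j \<in> frame_idx TYPE('n)"
  shows "(\<Sum>b\<in>UNIV. \<Sum>d\<in>UNIV. (\<Sum>c\<in>UNIV. Tt x0 b d c * l x0$c) * mf x0 i $ b * mf x0 j $ d)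
    = (\<Sum>c\<in>UNIV. pd c th x0 * l x0$c) * (if i = j then 1 else 0)"
proof -
  let ?w = "\<lambda>c. l x0 $ c"
  have str: "(\<Sum>c\<in>UNIV. Tt x0 b d c * ?w c) = (\<Sum>c\<in>UNIV. pd c th x0 * ?w c) * g x0$b$d
     + W b x0 * X d x0
     + lower g l b x0 * (\<Sum>c\<in>UNIV. (pd c (X d) x0 - (\<Sum>e\<in>UNIV. chr g e c d x0 * X e x0)) * ?w c)
     + (\<Sum>c\<in>UNIV. (pd c (Y b) x0 - (\<Sum>e\<in>UNIV. chr g e c b x0 * Y e x0)) * ?w c) * lower g l d x0
     + Y b x0 * W d x0" for b d
    unfolding Tt_struct W_def
    by (simp add: algebra_simps sum.distrib sum_subtractf sum_distrib_left sum_distrib_right)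
  have "(\<Sum>b\<in>UNIV. \<Sum>d\<in>UNIV. (\<Sum>c\<in>UNIV. Tt x0 b d c * l x0$c) * mf x0 i $ b * mf x0 j $ d)
    = (\<Sum>c\<in>UNIV. pd c th x0 * ?w c) * (\<Sum>b\<in>UNIV. \<Sum>d\<in>UNIV. g x0$b$d * mf x0 i $ b * mf x0 j $ d)
     + (\<Sum>b\<in>UNIV. W b x0 * mf x0 i $ b) * (\<Sum>d\<in>UNIV. X d x0 * mf x0 j $ d)
     + (\<Sum>b\<in>UNIV. lower g l b x0 * mf x0 i $ b) * (\<Sum>d\<in>UNIV. (\<Sum>c\<in>UNIV. (pd c (X d) x0 - (\<Sum>e\<in>UNIV. chr g e c d x0 * X e x0)) * ?w c) * mf x0 j $ d)
     + (\<Sum>b\<in>UNIV. (\<Sum>c\<in>UNIV. (pd c (Y b) x0 - (\<Sum>e\<in>UNIV. chr g e c b x0 * Y e x0)) * ?w c) * mf x0 i $ b) * (\<Sum>d\<in>UNIV. lower g l d x0 * mf x0 j $ d)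
     + (\<Sum>b\<in>UNIV. Y b x0 * mf x0 i $ b) * (\<Sum>d\<in>UNIV. W d x0 * mf x0 j $ d)"
    by (rule contr_A) (rule str)
  also have "\<dots> = (\<Sum>c\<in>UNIV. pd c th x0 * ?w c) * (if i = j then 1 else 0)"
    using W_m[OF x0V i] W_m[OF x0V j] lam_m[OF x0U i] lam_m[OF x0U j] fr_facts(6)[OF x0U i j]
    unfolding gform_def by simp
  finally show ?thesis .
qed

lemma Tt_l: fixes b c
  shows "(\<Sum>d\<in>UNIV. Tt x0 b d c * l x0$d) = pd c fV x0 * lower g l b x0 + fV x0 * cov_low g l b c x0
     - (\<Sum>e\<in>UNIV. cov_low g l b e x0 * K e c x0)"
proof -
  have pW: "pd c (W b) x0 = (\<Sum>d\<in>UNIV. pd c (lf d) x0 * cov_low g l b d x0 + l x0$d * pd c (cov_low g l b d) x0)"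
    unfolding W_def[abs_def]
    by (subst pd_sum) (auto intro!: differentiable_mult ld cov_d x0U simp: pd_mult ld cov_d x0U)
  have pW2: "pd c (W b) x0 = pd c fV x0 * lower g l b x0 + fV x0 * pd c (lower g l b) x0"
  proof -
    have "pd c (W b) x0 = pd c (\<lambda>y. fV y * lower g l b y) x0"
      by (rule pd_local[OF V_open x0V]) (rule W_eq)
    then show ?thesis by (simp add: pd_mult fV_d x0V lower_d x0U)
  qed
  have s1: "(\<Sum>d\<in>UNIV. (\<Sum>e\<in>UNIV. chr g e c b x0 * cov_low g l e d x0) * l x0$d)
      = fV x0 * (\<Sum>e\<in>UNIV. chr g e c b x0 * lower g l e x0)"
  proof -
    have "(\<Sum>d\<in>UNIV. (\<Sum>e\<in>UNIV. chr g e c b x0 * cov_low g l e d x0) * l x0$d)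
       = (\<Sum>e\<in>UNIV. chr g e c b x0 * W e x0)"
      unfolding W_def by (simp add: sum_distrib_left sum_distrib_right mult_ac) (rule sum.swap)
    then show ?thesis by (simp add: W_eq[OF x0V] sum_distrib_left mult_ac)
  qed
  have s2: "(\<Sum>d\<in>UNIV. (\<Sum>e\<in>UNIV. chr g e c d x0 * cov_low g l b e x0) * l x0$d)
      = (\<Sum>e\<in>UNIV. cov_low g l b e x0 * (\<Sum>d\<in>UNIV. chr g e c d x0 * l x0$d))"
    by (simp add: sum_distrib_left sum_distrib_right mult_ac) (rule sum.swap)
  have Lbc: "cov_low g l b c x0 = pd c (lower g l b) x0 - (\<Sum>e\<in>UNIV. chr g e c b x0 * lower g l e x0)"
    unfolding cov_low_def using chr_sym[OF x0U] by simp
  have "(\<Sum>d\<in>UNIV. Tt x0 b d c * l x0$d) = (\<Sum>d\<in>UNIV. l x0$d * pd c (cov_low g l b d) x0)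
     - (\<Sum>d\<in>UNIV. (\<Sum>e\<in>UNIV. chr g e c b x0 * cov_low g l e d x0) * l x0$d)
     - (\<Sum>d\<in>UNIV. (\<Sum>e\<in>UNIV. chr g e c d x0 * cov_low g l b e x0) * l x0$d)"
    unfolding Tt_def by (simp add: algebra_simps sum_subtractf sum.distrib)
  also have "(\<Sum>d\<in>UNIV. l x0$d * pd c (cov_low g l b d) x0) = pd c fV x0 * lower g l b x0 + fV x0 * pd c (lower g l b) x0
       - (\<Sum>d\<in>UNIV. pd c (lf d) x0 * cov_low g l b d x0)"
    using pW pW2 by (simp add: sum.distrib)
  finally show ?thesis unfolding s1 s2 Lbc K_def
    by (simp add: algebra_simps sum.distrib sum_subtractf sum_distrib_left)
qed

end

context geo_pt begin

lemma vK_gform: assumes j: "j \<in> frame_idx TYPE('n)"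
  shows "gform (g x0) u (\<chi> e. \<Sum>c\<in>UNIV. K e c x0 * mf x0 j $ c) = gform (Lm x0) u (mf x0 j)"
proof -
  have "gform (g x0) u (\<chi> e. \<Sum>c\<in>UNIV. K e c x0 * mf x0 j $ c)
      = (\<Sum>a\<in>UNIV. \<Sum>e\<in>UNIV. \<Sum>c\<in>UNIV. u$a * (g x0$a$e * K e c x0) * mf x0 j $ c)"
    unfolding gform_def by (simp add: sum_distrib_left mult_ac)
  also have "\<dots> = (\<Sum>a\<in>UNIV. \<Sum>c\<in>UNIV. \<Sum>e\<in>UNIV. u$a * (g x0$a$e * K e c x0) * mf x0 j $ c)"
    by (rule sum.cong[OF refl]) (rule sum.swap)
  also have "\<dots> = (\<Sum>a\<in>UNIV. \<Sum>c\<in>UNIV. u$a * cov_low g l a c x0 * mf x0 j $ c)"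
    unfolding compatL[OF x0U] by (simp add: sum_distrib_left sum_distrib_right mult_ac)
  also have "\<dots> = gform (Lm x0) u (mf x0 j)"
    unfolding gform_def Lm_def by (simp add: mult_ac)
  finally show ?thesis .
qed

lemma vK_eq: assumes j: "j \<in> frame_idx TYPE('n)"
  shows "(\<chi> e. \<Sum>c\<in>UNIV. K e c x0 * mf x0 j $ c) =
     gform (Lm x0) (nf x0) (mf x0 j) *\<^sub>R l x0 + th x0 *\<^sub>R mf x0 j"
proof -
  let ?v = "(\<chi> e. \<Sum>c\<in>UNIV. K e c x0 * mf x0 j $ c)"
  have "?v = gform (g x0) (nf x0) ?v *\<^sub>R l x0 + gform (g x0) (l x0) ?v *\<^sub>R nf x0
       + (\<Sum>k\<in>frame_idx TYPE('n). gform (g x0) (mf x0 k) ?v *\<^sub>R mf x0 k)"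
    by (rule frame_complete[OF symg[OF x0U] N2 fr[OF x0U]])
  also have "gform (g x0) (l x0) ?v = 0" using vK_gform[OF j] Lm_l1[OF x0U] by simp
  also have "(\<Sum>k\<in>frame_idx TYPE('n). gform (g x0) (mf x0 k) ?v *\<^sub>R mf x0 k)
      = (\<Sum>k\<in>frame_idx TYPE('n). (if k = j then th x0 else 0) *\<^sub>R mf x0 k)"
    by (rule sum.cong[OF refl]) (simp add: vK_gform[OF j] Lij_th[OF x0V _ j, folded Lij_gform] Lij_gform[symmetric])
  also have "\<dots> = th x0 *\<^sub>R mf x0 j"
    using j by (simp add: if_distrib[of "\<lambda>t. t *\<^sub>R _"] sum.delta frame_idx_def cong: if_cong)
  finally show ?thesis by (simp add: vK_gform[OF j])
qed

lemma TC2: assumes i: "i \<in> frame_idx TYPE('n)" and j: "j \<in> frame_idx TYPE('n)"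
  shows "(\<Sum>b\<in>UNIV. \<Sum>c\<in>UNIV. (\<Sum>d\<in>UNIV. Tt x0 b d c * l x0$d) * mf x0 i $ b * mf x0 j $ c)
    = (fV x0 * th x0 - th x0 * th x0) * (if i = j then 1 else 0)"
proof -
  let ?m = "mf x0"
  have t1: "(\<Sum>b\<in>UNIV. \<Sum>c\<in>UNIV. pd c fV x0 * lower g l b x0 * ?m i $ b * ?m j $ c) = 0"
  proof -
    have "(\<Sum>b\<in>UNIV. \<Sum>c\<in>UNIV. pd c fV x0 * lower g l b x0 * ?m i $ b * ?m j $ c)
       = (\<Sum>b\<in>UNIV. lower g l b x0 * ?m i $ b) * (\<Sum>c\<in>UNIV. pd c fV x0 * ?m j $ c)"
      unfolding sum_product by (simp add: mult_ac)
    then show ?thesis using lam_m[OF x0U i] by simp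
  qed
  have t2: "(\<Sum>b\<in>UNIV. \<Sum>c\<in>UNIV. fV x0 * cov_low g l b c x0 * ?m i $ b * ?m j $ c) = fV x0 * (if i = j then th x0 else 0)"
  proof -
    have "(\<Sum>b\<in>UNIV. \<Sum>c\<in>UNIV. fV x0 * cov_low g l b c x0 * ?m i $ b * ?m j $ c) = fV x0 * Lij g l ?m x0 i j"
      unfolding Lij_def by (simp add: sum_distrib_left mult_ac)
    then show ?thesis using Lij_th[OF x0V i j] by simp
  qed
  have t3: "(\<Sum>b\<in>UNIV. \<Sum>c\<in>UNIV. (\<Sum>e\<in>UNIV. cov_low g l b e x0 * K e c x0) * ?m i $ b * ?m j $ c)
       = th x0 * (if i = j then th x0 else 0)"
  proof -
    have "(\<Sum>b\<in>UNIV. \<Sum>c\<in>UNIV. (\<Sum>e\<in>UNIV. cov_low g l b e x0 * K e c x0) * ?m i $ b * ?m j $ c)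
       = (\<Sum>b\<in>UNIV. \<Sum>c\<in>UNIV. \<Sum>e\<in>UNIV. cov_low g l b e x0 * K e c x0 * ?m i $ b * ?m j $ c)"
      by (simp add: sum_distrib_right)
    also have "\<dots> = (\<Sum>b\<in>UNIV. \<Sum>e\<in>UNIV. \<Sum>c\<in>UNIV. cov_low g l b e x0 * K e c x0 * ?m i $ b * ?m j $ c)"
      by (rule sum.cong[OF refl]) (rule sum.swap)
    also have "\<dots> = gform (Lm x0) (?m i) (\<chi> e. \<Sum>c\<in>UNIV. K e c x0 * ?m j $ c)"
      unfolding gform_def Lm_def by (simp add: sum_distrib_left mult_ac)
    also have "\<dots> = gform (Lm x0) (nf x0) (?m j) * gform (Lm x0) (?m i) (l x0) + th x0 * gform (Lm x0) (?m i) (?m j)"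
      unfolding vK_eq[OF j] by (simp add: gform_add2 gform_scale2)
    also have "\<dots> = th x0 * (if i = j then th x0 else 0)"
      using Lm_l2[OF x0V, of "?m i"] lam_m[OF x0U i] Lij_th[OF x0V i j] by (simp add: Lij_gform)
    finally show ?thesis .
  qed
  have "(\<Sum>b\<in>UNIV. \<Sum>c\<in>UNIV. (\<Sum>d\<in>UNIV. Tt x0 b d c * l x0$d) * ?m i $ b * ?m j $ c)
     = (\<Sum>b\<in>UNIV. \<Sum>c\<in>UNIV. pd c fV x0 * lower g l b x0 * ?m i $ b * ?m j $ c)
     + (\<Sum>b\<in>UNIV. \<Sum>c\<in>UNIV. fV x0 * cov_low g l b c x0 * ?m i $ b * ?m j $ c)
     - (\<Sum>b\<in>UNIV. \<Sum>c\<in>UNIV. (\<Sum>e\<in>UNIV. cov_low g l b e x0 * K e c x0) * ?m i $ b * ?m j $ c)"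
    unfolding Tt_l by (simp add: algebra_simps sum.distrib sum_subtractf)
  also have "\<dots> = (fV x0 * th x0 - th x0 * th x0) * (if i = j then 1 else 0)"
    unfolding t1 t2 t3 by simp
  finally show ?thesis .
qed

end

definition Rq :: "('n::finite \<Rightarrow> 'n \<Rightarrow> 'n \<Rightarrow> 'n \<Rightarrow> real) \<Rightarrow> real^'n \<Rightarrow> real^'n \<Rightarrow> real^'n \<Rightarrow> real^'n \<Rightarrow> real" where
  "Rq R p q r s = (\<Sum>a\<in>UNIV. \<Sum>b\<in>UNIV. \<Sum>c\<in>UNIV. \<Sum>d\<in>UNIV. R a b c d * p$a * q$b * r$c * s$d)"

definition gq :: "('n::finite \<Rightarrow> 'n \<Rightarrow> real) \<Rightarrow> real^'n \<Rightarrow> real^'n \<Rightarrow> real" where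
  "gq F u v = (\<Sum>a\<in>UNIV. \<Sum>c\<in>UNIV. F a c * u$a * v$c)"

lemma Rq_add: "Rq (\<lambda>a b c d. A a b c d + B a b c d) p q r s = Rq A p q r s + Rq B p q r s"
  unfolding Rq_def by (simp add: algebra_simps sum.distrib)
lemma Rq_diff: "Rq (\<lambda>a b c d. A a b c d - B a b c d) p q r s = Rq A p q r s - Rq B p q r s"
  unfolding Rq_def by (simp add: algebra_simps sum_subtractf)
lemma Rq_cmult: "Rq (\<lambda>a b c d. k * A a b c d) p q r s = k * Rq A p q r s"
  unfolding Rq_def by (simp add: sum_distrib_left mult_ac)

lemma swap_mid: "(\<Sum>a\<in>UNIV. \<Sum>b\<in>UNIV. \<Sum>c\<in>UNIV. \<Sum>d\<in>UNIV. F a b c d) = (\<Sum>a\<in>UNIV. \<Sum>c\<in>UNIV. \<Sum>b\<in>UNIV. \<Sum>d\<in>UNIV. F a b c d)"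
  for F :: "'n::finite \<Rightarrow> 'n \<Rightarrow> 'n \<Rightarrow> 'n \<Rightarrow> real"
  by (rule sum.cong[OF refl]) (rule sum.swap)

lemma Rq_AC: "Rq (\<lambda>a b c d. A a c * B b d) p q r s = gq A p r * gq B q s"
proof -
  have "Rq (\<lambda>a b c d. A a c * B b d) p q r s = (\<Sum>a\<in>UNIV. \<Sum>c\<in>UNIV. \<Sum>b\<in>UNIV. \<Sum>d\<in>UNIV. (A a c * p$a * r$c) * (B b d * q$b * s$d))"
    unfolding Rq_def by (subst swap_mid) (simp add: mult_ac)
  also have "\<dots> = gq A p r * gq B q s"
    unfolding gq_def by (simp only: sum_distrib_right, simp only: sum_distrib_left)
  finally show ?thesis .
qed

lemma Rq_BD: "Rq (\<lambda>a b c d. B b d * A a c) p q r s = gq A p r * gq B q s"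
  using Rq_AC[of A B p q r s] by (simp add: mult.commute)

lemma Rq_AD: "Rq (\<lambda>a b c d. A a d * B b c) p q r s = gq A p s * gq B q r"
proof -
  have "Rq (\<lambda>a b c d. A a d * B b c) p q r s = (\<Sum>a\<in>UNIV. \<Sum>b\<in>UNIV. \<Sum>d\<in>UNIV. \<Sum>c\<in>UNIV. A a d * B b c * p$a * q$b * r$c * s$d)"
    unfolding Rq_def by (rule sum.cong[OF refl], rule sum.cong[OF refl], rule sum.swap)
  also have "\<dots> = (\<Sum>a\<in>UNIV. \<Sum>d\<in>UNIV. \<Sum>b\<in>UNIV. \<Sum>c\<in>UNIV. (A a d * p$a * s$d) * (B b c * q$b * r$c))"
    by (subst swap_mid) (simp add: mult_ac)
  also have "\<dots> = gq A p s * gq B q r"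
    unfolding gq_def by (simp only: sum_distrib_right, simp only: sum_distrib_left)
  finally show ?thesis .
qed

lemma Rq_BC: "Rq (\<lambda>a b c d. B b c * A a d) p q r s = gq A p s * gq B q r"
  using Rq_AD[of A B p q r s] by (simp add: mult.commute)

lemma Rq_swap12: "Rq R p q r s = Rq (\<lambda>a b c d. R b a c d) q p r s"
  unfolding Rq_def by (subst sum.swap) (simp add: mult_ac)

lemma Rq_swap34: "Rq R p q r s = Rq (\<lambda>a b c d. R a b d c) p q s r"
  unfolding Rq_def by (rule sum.cong[OF refl], rule sum.cong[OF refl], subst sum.swap) (simp add: mult_ac)

lemma Rq_neg: "Rq (\<lambda>a b c d. - R a b c d) p q r s = - Rq R p q r s"
  unfolding Rq_def by (simp add: sum_negf)

lemma Rq_first: "Rq R p q r s = (\<Sum>b\<in>UNIV. \<Sum>c\<in>UNIV. \<Sum>d\<in>UNIV. (\<Sum>a\<in>UNIV. p$a * R a b c d) * q$b * r$c * s$d)"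
proof -
  have "Rq R p q r s = (\<Sum>b\<in>UNIV. \<Sum>a\<in>UNIV. \<Sum>c\<in>UNIV. \<Sum>d\<in>UNIV. p$a * R a b c d * q$b * r$c * s$d)"
    unfolding Rq_def by (subst sum.swap) (simp add: mult_ac)
  also have "\<dots> = (\<Sum>b\<in>UNIV. \<Sum>c\<in>UNIV. \<Sum>a\<in>UNIV. \<Sum>d\<in>UNIV. p$a * R a b c d * q$b * r$c * s$d)"
    by (rule sum.cong[OF refl], rule sum.swap)
  also have "\<dots> = (\<Sum>b\<in>UNIV. \<Sum>c\<in>UNIV. \<Sum>d\<in>UNIV. \<Sum>a\<in>UNIV. p$a * R a b c d * q$b * r$c * s$d)"
    by (rule sum.cong[OF refl], rule sum.cong[OF refl], rule sum.swap)
  also have "\<dots> = (\<Sum>b\<in>UNIV. \<Sum>c\<in>UNIV. \<Sum>d\<in>UNIV. (\<Sum>a\<in>UNIV. p$a * R a b c d) * q$b * r$c * s$d)"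
    by (simp add: sum_distrib_right)
  finally show ?thesis .
qed

lemma reorder4: "(\<Sum>e\<in>UNIV. \<Sum>f\<in>UNIV. \<Sum>a\<in>UNIV. \<Sum>c\<in>UNIV. F e f a c) = (\<Sum>f\<in>UNIV. \<Sum>c\<in>UNIV. \<Sum>e\<in>UNIV. \<Sum>a\<in>UNIV. F e f a c)"
  for F :: "'n::finite \<Rightarrow> 'n \<Rightarrow> 'n \<Rightarrow> 'n \<Rightarrow> real"
proof -
  have "(\<Sum>e\<in>UNIV. \<Sum>f\<in>UNIV. \<Sum>a\<in>UNIV. \<Sum>c\<in>UNIV. F e f a c) = (\<Sum>f\<in>UNIV. \<Sum>e\<in>UNIV. \<Sum>a\<in>UNIV. \<Sum>c\<in>UNIV. F e f a c)"
    by (rule sum.swap)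
  also have "\<dots> = (\<Sum>f\<in>UNIV. \<Sum>e\<in>UNIV. \<Sum>c\<in>UNIV. \<Sum>a\<in>UNIV. F e f a c)"
    by (rule sum.cong[OF refl], rule sum.cong[OF refl], rule sum.swap)
  also have "\<dots> = (\<Sum>f\<in>UNIV. \<Sum>c\<in>UNIV. \<Sum>e\<in>UNIV. \<Sum>a\<in>UNIV. F e f a c)"
    by (rule sum.cong[OF refl], rule sum.swap)
  finally show ?thesis .
qed

lemma gq_gform: "gq (\<lambda>a c. G$a$c) u v = gform G u v"
  unfolding gq_def gform_def by simp

lemma pair_swap: "(\<Sum>a\<in>UNIV. \<Sum>c\<in>UNIV. \<Sum>e\<in>UNIV. \<Sum>f\<in>UNIV. F a c e f) = (\<Sum>e\<in>UNIV. \<Sum>f\<in>UNIV. \<Sum>a\<in>UNIV. \<Sum>c\<in>UNIV. F a c e f)"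
  for F :: "'n::finite \<Rightarrow> 'n \<Rightarrow> 'n \<Rightarrow> 'n \<Rightarrow> real"
proof -
  have "(\<Sum>a\<in>UNIV. \<Sum>c\<in>UNIV. \<Sum>e\<in>UNIV. \<Sum>f\<in>UNIV. F a c e f) = (\<Sum>a\<in>UNIV. \<Sum>e\<in>UNIV. \<Sum>c\<in>UNIV. \<Sum>f\<in>UNIV. F a c e f)"
    by (rule swap_mid)
  also have "\<dots> = (\<Sum>e\<in>UNIV. \<Sum>a\<in>UNIV. \<Sum>c\<in>UNIV. \<Sum>f\<in>UNIV. F a c e f)" by (rule sum.swap)
  also have "\<dots> = (\<Sum>e\<in>UNIV. \<Sum>a\<in>UNIV. \<Sum>f\<in>UNIV. \<Sum>c\<in>UNIV. F a c e f)"
    by (rule sum.cong[OF refl], rule sum.cong[OF refl], rule sum.swap)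
  also have "\<dots> = (\<Sum>e\<in>UNIV. \<Sum>f\<in>UNIV. \<Sum>a\<in>UNIV. \<Sum>c\<in>UNIV. F a c e f)"
    by (rule sum.cong[OF refl], rule sum.swap)
  finally show ?thesis .
qed

context geo begin

definition "RicLL x = gq (\<lambda>a c. ricci g c a x) (l x) (l x)"

lemma weyl_C: assumes x: "x \<in> U" and i: "i \<in> frame_idx TYPE('n)" and j: "j \<in> frame_idx TYPE('n)"
  shows "C0i0j g l (mf x) x i j = Rq (\<lambda>a b c d. riem g a b c d x) (l x) (mf x i) (l x) (mf x j)
     - (if i = j then 1 else 0) * RicLL x / (real CARD('n) - 2)"
proof -
  let ?k1 = "1 / (real CARD('n) - 2)" and ?k2 = "scal g x / ((real CARD('n) - 1) * (real CARD('n) - 2))"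
  have wf: "(\<lambda>a b c d. weyl g a b c d x) = (\<lambda>a b c d. riem g a b c d x
     - ?k1 * (g x$a$c * ricci g d b x - g x$a$d * ricci g c b x - g x$b$c * ricci g d a x + g x$b$d * ricci g c a x)
     + ?k2 * (g x$a$c * g x$d$b - g x$a$d * g x$c$b))"
    by (intro ext) (simp add: weyl_def Let_def)
  have C: "C0i0j g l (mf x) x i j = Rq (\<lambda>a b c d. weyl g a b c d x) (l x) (mf x i) (l x) (mf x j)"
    unfolding C0i0j_def Rq_def by simp
  have fx: "gform (g x) (l x) (l x) = 0" "gform (g x) (l x) (mf x j) = 0" "gform (g x) (mf x i) (l x) = 0"
     "gform (g x) (mf x i) (mf x j) = (if i = j then 1 else 0)"
    using frame x i j unfolding null_frame_def
    by (auto simp: gform_sym[OF symg[OF x], of "mf x i" "l x"])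
  have g1: "gq (\<lambda>a c. g x$a$c) (l x) (l x) = 0" using fx(1) by (simp add: gq_gform)
  have g2: "gq (\<lambda>a d. g x$a$d) (l x) (mf x j) = 0" using fx(2) by (simp add: gq_gform)
  have g3: "gq (\<lambda>b c. g x$b$c) (mf x i) (l x) = 0" using fx(3) by (simp add: gq_gform)
  have g4: "gq (\<lambda>b d. g x$b$d) (mf x i) (mf x j) = (if i = j then 1 else 0)" using fx(4) by (simp add: gq_gform)
  show ?thesis
    unfolding C wf Rq_add Rq_diff Rq_cmult Rq_AC Rq_AD Rq_BC Rq_BD g1 g2 g3 g4 RicLL_def
    by simp
qed

lemma riemup_ginv: assumes x: "x \<in> U"
  shows "riem_up g e b c d x = (\<Sum>f\<in>UNIV. ginv g x $e$f * riem g f b c d x)"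
proof -
  have "(\<Sum>f\<in>UNIV. ginv g x $e$f * riem g f b c d x) = (\<Sum>h\<in>UNIV. (\<Sum>f\<in>UNIV. ginv g x $e$f * g x$f$h) * riem_up g h b c d x)"
    unfolding riem_def by (simp add: sum_distrib_left sum_distrib_right mult_ac) (rule sum.swap)
  also have "\<dots> = riem_up g e b c d x" using ginv_l[OF x] by (simp add: delta_mult)
  finally show ?thesis by simp
qed

lemma Rq_z1: assumes "\<And>a b c d. R a b c d = - R a b d c" shows "Rq R p q r r = 0"
proof -
  have "Rq R p q r r = Rq (\<lambda>a b c d. R a b d c) p q r r" by (rule Rq_swap34)
  also have "\<dots> = Rq (\<lambda>a b c d. - R a b c d) p q r r" using assms by (metis minus_minus)
  also have "\<dots> = - Rq R p q r r" by (rule Rq_neg)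
  finally show ?thesis by simp
qed

lemma Rq_z2: assumes "\<And>a b c d. R a b c d = - R b a c d" shows "Rq R p p r s = 0"
proof -
  have "Rq R p p r s = Rq (\<lambda>a b c d. R b a c d) p p r s" by (rule Rq_swap12)
  also have "\<dots> = Rq (\<lambda>a b c d. - R a b c d) p p r s" using assms by (metis minus_minus)
  also have "\<dots> = - Rq R p p r s" by (rule Rq_neg)
  finally show ?thesis by simp
qed

lemma Rq_pair: assumes "\<And>a b c d. R a b c d = - R b a c d" "\<And>a b c d. R a b c d = - R a b d c"
  shows "Rq R p q p q = Rq R q p q p"
proof -
  have "Rq R p q p q = Rq (\<lambda>a b c d. R b a c d) q p p q" by (rule Rq_swap12)
  also have "\<dots> = Rq (\<lambda>a b c d. - R a b c d) q p p q" using assms(1) by (metis minus_minus)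
  also have "\<dots> = - Rq R q p p q" by (rule Rq_neg)
  also have "Rq R q p p q = Rq (\<lambda>a b c d. R a b d c) q p q p" by (rule Rq_swap34)
  also have "\<dots> = Rq (\<lambda>a b c d. - R a b c d) q p q p" using assms(2) by (metis minus_minus)
  also have "\<dots> = - Rq R q p q p" by (rule Rq_neg)
  finally show ?thesis by simp
qed

lemma RicLL_eq: assumes x: "x \<in> U"
  shows "RicLL x = (\<Sum>k\<in>frame_idx TYPE('n). Rq (\<lambda>a b c d. riem g a b c d x) (l x) (mf x k) (l x) (mf x k))"
proof -
  let ?R = "\<lambda>a b c d. riem g a b c d x"
  define M where "M = (\<chi> e f. \<Sum>a\<in>UNIV. \<Sum>c\<in>UNIV. riem g f c e a x * l x$a * l x$c)"
  have gM: "gform M u v = Rq ?R v (l x) u (l x)" for u v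
  proof -
    have "gform M u v = (\<Sum>e\<in>UNIV. \<Sum>f\<in>UNIV. \<Sum>a\<in>UNIV. \<Sum>c\<in>UNIV. riem g f c e a x * v$f * l x$c * u$e * l x$a)"
      unfolding gform_def M_def by (simp add: sum_distrib_left sum_distrib_right mult_ac)
    also have "\<dots> = Rq ?R v (l x) u (l x)" unfolding Rq_def by (rule reorder4)
    finally show ?thesis .
  qed
  have "RicLL x = (\<Sum>a\<in>UNIV. \<Sum>c\<in>UNIV. \<Sum>e\<in>UNIV. \<Sum>f\<in>UNIV. ginv g x $e$f * riem g f c e a x * l x$a * l x$c)"
    unfolding RicLL_def gq_def ricci_def riemup_ginv[OF x] by (simp add: sum_distrib_left sum_distrib_right mult_ac)
  also have "\<dots> = (\<Sum>e\<in>UNIV. \<Sum>f\<in>UNIV. \<Sum>a\<in>UNIV. \<Sum>c\<in>UNIV. ginv g x $e$f * riem g f c e a x * l x$a * l x$c)"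
    by (rule pair_swap)
  also have "\<dots> = (\<Sum>e\<in>UNIV. \<Sum>f\<in>UNIV. ginv g x $e$f * M$e$f)"
    unfolding M_def by (simp add: sum_distrib_left mult_ac)
  also have "\<dots> = gform M (l x) (nf x) + gform M (nf x) (l x) + (\<Sum>k\<in>frame_idx TYPE('n). gform M (mf x k) (mf x k))"
    by (rule trace_frame) (rule ginv_frame[OF x])
  also have "\<dots> = (\<Sum>k\<in>frame_idx TYPE('n). Rq ?R (l x) (mf x k) (l x) (mf x k))"
  proof -
    have "gform M (l x) (nf x) = 0" unfolding gM by (rule Rq_z1) (rule riem_cd)
    moreover have "gform M (nf x) (l x) = 0" unfolding gM by (rule Rq_z2) (rule riem_antisym[OF x])
    moreover have "gform M (mf x k) (mf x k) = Rq ?R (l x) (mf x k) (l x) (mf x k)" for k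
      unfolding gM by (rule Rq_pair) (rule riem_antisym[OF x], rule riem_cd)
    ultimately show ?thesis by simp
  qed
  finally show ?thesis .
qed

end

context geo_pt begin

definition "rho = fV x0 * th x0 - th x0 * th x0 - (\<Sum>c\<in>UNIV. pd c th x0 * l x0$c)"

lemma B_eq: assumes i: "i \<in> frame_idx TYPE('n)" and j: "j \<in> frame_idx TYPE('n)"
  shows "Rq (\<lambda>a b c d. riem g a b c d x0) (l x0) (mf x0 i) (l x0) (mf x0 j) = rho * (if i = j then 1 else 0)"
proof -
  let ?m = "mf x0" and ?w = "\<lambda>c. l x0 $ c"
  have la: "(\<Sum>a\<in>UNIV. l x0$a * riem g a b c d x0) = Tt x0 b c d - Tt x0 b d c" for b c d
    using l_riem[OF x0U, of b c d] ricci_id[OF x0U, of b d c] by simp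
  have "Rq (\<lambda>a b c d. riem g a b c d x0) (l x0) (?m i) (l x0) (?m j)
     = (\<Sum>b\<in>UNIV. \<Sum>c\<in>UNIV. \<Sum>d\<in>UNIV. (Tt x0 b c d - Tt x0 b d c) * ?m i $ b * ?w c * ?m j $ d)"
    unfolding Rq_first la ..
  also have "\<dots> = (\<Sum>b\<in>UNIV. \<Sum>c\<in>UNIV. \<Sum>d\<in>UNIV. Tt x0 b c d * ?m i $ b * ?w c * ?m j $ d)
       - (\<Sum>b\<in>UNIV. \<Sum>c\<in>UNIV. \<Sum>d\<in>UNIV. Tt x0 b d c * ?m i $ b * ?w c * ?m j $ d)"
    by (simp add: algebra_simps sum_subtractf)
  also have "(\<Sum>b\<in>UNIV. \<Sum>c\<in>UNIV. \<Sum>d\<in>UNIV. Tt x0 b c d * ?m i $ b * ?w c * ?m j $ d)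
      = (\<Sum>b\<in>UNIV. \<Sum>d\<in>UNIV. (\<Sum>c\<in>UNIV. Tt x0 b c d * ?w c) * ?m i $ b * ?m j $ d)"
    by (rule sum.cong[OF refl], subst sum.swap) (simp add: sum_distrib_right sum_distrib_left mult_ac)
  also have "\<dots> = (fV x0 * th x0 - th x0 * th x0) * (if i = j then 1 else 0)"
    using TC2[OF i j] .
  also have "(\<Sum>b\<in>UNIV. \<Sum>c\<in>UNIV. \<Sum>d\<in>UNIV. Tt x0 b d c * ?m i $ b * ?w c * ?m j $ d)
      = (\<Sum>b\<in>UNIV. \<Sum>d\<in>UNIV. (\<Sum>c\<in>UNIV. Tt x0 b d c * ?w c) * ?m i $ b * ?m j $ d)"
    by (rule sum.cong[OF refl], subst sum.swap) (simp add: sum_distrib_right sum_distrib_left mult_ac)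
  also have "\<dots> = (\<Sum>c\<in>UNIV. pd c th x0 * l x0$c) * (if i = j then 1 else 0)"
    using TC1[OF i j] .
  finally show ?thesis unfolding rho_def by (simp add: algebra_simps)
qed

lemma C_zero: assumes i: "i \<in> frame_idx TYPE('n)" and j: "j \<in> frame_idx TYPE('n)"
  shows "C0i0j g l (mf x0) x0 i j = 0"
proof -
  have "RicLL x0 = (\<Sum>k\<in>frame_idx TYPE('n). rho)"
    unfolding RicLL_eq[OF x0U] by (rule sum.cong[OF refl]) (simp add: B_eq)
  also have "\<dots> = (real CARD('n) - 2) * rho"
    using dim by (simp add: card_FI of_nat_diff)
  finally have R: "RicLL x0 = (real CARD('n) - 2) * rho" .
  have n2: "real CARD('n) - 2 \<noteq> 0" using dim by simp
  show ?thesis unfolding weyl_C[OF x0U i j] B_eq[OF i j] R using n2 by simp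
qed

end

theorem prop4_core:
  fixes g :: "real^'n::finite \<Rightarrow> real^'n^'n"
    and l nf :: "real^'n \<Rightarrow> real^'n"
    and mf :: "real^'n \<Rightarrow> nat \<Rightarrow> real^'n"
    and U :: "(real^'n) set"
  assumes dim: "CARD('n) > 4"
    and U_open: "open U"
    and metric: "lorentzian_metric U g"
    and l_smooth: "smooth_vf U l"
    and frame: "\<forall>x\<in>U. null_frame (g x) (l x) (nf x) (mf x)"
    and geod: "geodetic g U l"
    and not_wand: "\<not> wand g U l mf"
    and shearfree: "\<forall>x\<in>U. \<forall>i\<in>frame_idx TYPE('n). \<forall>j\<in>frame_idx TYPE('n). shear g l (mf x) x i j = 0"
  shows "\<exists>x\<in>U. \<exists>i\<in>frame_idx TYPE('n). \<exists>j\<in>frame_idx TYPE('n). twist g l (mf x) x i j \<noteq> 0"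
proof (rule ccontr)
  assume nt: "\<not> (\<exists>x\<in>U. \<exists>i\<in>frame_idx TYPE('n). \<exists>j\<in>frame_idx TYPE('n). twist g l (mf x) x i j \<noteq> 0)"
  have G: "geo g l nf mf U" using dim U_open metric l_smooth frame geod by unfold_locales
  have "wand g U l mf"
    unfolding wand_def
  proof (intro ballI)
    fix x i j assume x: "x \<in> U" and i: "i \<in> frame_idx TYPE('n)" and j: "j \<in> frame_idx TYPE('n)"
    have "gform (g x) (l x) (nf x) = 1" using frame x unfolding null_frame_def by blast
    then have "(\<Sum>b\<in>UNIV. lower g l b x * nf x $ b) = 1"
      unfolding gform_def lower_def using geo.symg[OF G x]
      by (subst (asm) sum.swap) (simp add: sum_distrib_left sum_distrib_right mult_ac)
    then obtain a0 where a0: "lower g l a0 x \<noteq> 0" by (metis (no_types, lifting) mult_zero_left sum.neutral zero_neq_one)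
    interpret P: geo_pt g l nf mf U x a0
      by (rule geo_pt.intro[OF G]) (unfold_locales, use x a0 shearfree nt in auto)
    show "C0i0j g l (mf x) x i j = 0" by (rule P.C_zero[OF i j])
  qed
  then show False using not_wand by blast
qed

theorem proposition4:
  fixes g :: "real^'n::finite \<Rightarrow> real^'n^'n"
    and l nf :: "real^'n \<Rightarrow> real^'n"
    and mf :: "real^'n \<Rightarrow> nat \<Rightarrow> real^'n"
    and U :: "(real^'n) set"
  assumes dim: "CARD('n) > 4"
    and U_open: "open U"
    and metric: "lorentzian_metric U g"
    and l_smooth: "smooth_vf U l"
    and frame: "\<forall>x\<in>U. null_frame (g x) (l x) (nf x) (mf x)"
    and geod: "geodetic g U l"
    and not_wand: "\<not> wand g U l mf"
    and shearfree: "\<forall>x\<in>U. \<forall>i\<in>frame_idx TYPE('n). \<forall>j\<in>frame_idx TYPE('n). shear g l (mf x) x i j = 0"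
  shows "\<exists>x\<in>U. \<exists>i\<in>frame_idx TYPE('n). \<exists>j\<in>frame_idx TYPE('n). twist g l (mf x) x i j \<noteq> 0"
  using dim U_open metric l_smooth frame geod not_wand shearfree by (rule prop4_core)

end
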